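(* Let $H$ be a real Hilbert space, let $m\ge1$, let $\mathcal{A}_i:H\to2^H$ ($i=1,\dots,m$) be maximally monotone, let $\mathcal{B}:H\to H$ be monotone and $L$-Lipschitz ($L>0$), let $\mathcal{C}:H\to H$ be $\beta$-cocoercive ($\beta>0$), and assume that the set of $\mathbf{x}\in H$ with $0\in\sum_{i=1}^m\mathcal{A}_i\mathbf{x}+\mathcal{B}\mathbf{x}+\mathcal{C}\mathbf{x}$ is nonempty. Let $\omega_1,\dots,\omega_m\in(0,1]$ with $\sum_i\omega_i=1$, and let $\gamma\in\left(0,\frac{\beta}{2(1+4\beta L)}\right)$. Let $(\mathbf{z}_{i,0})_{i},(\mathbf{y}_{i,0})_i,(\mathbf{y}_{i,-1})_i\in H^m$ and iterate, for $n\ge0$, $$\mathbf{x}_{n+1}=\sum_{j=1}^m\omega_j\mathbf{z}_{j,n},$$ and for $i=1,\dots,m$: $$\mathbf{y}_{i,n+1}=J_{\frac{\gamma}{\omega_i}\mathcal{A}_i}\big(2\mathbf{x}_{n+1}-\mathbf{z}_{i,n}-2\gamma\mathcal{B}\mathbf{y}_{i,n}+\gamma\mathcal{B}\mathbf{y}_{i,n-1}-\gamma\mathcal{C}\mathbf{y}_{i,n}\big),\qquad \mathbf{z}_{i,n+1}=\mathbf{z}_{i,n}+\mathbf{y}_{i,n+1}-\mathbf{x}_{n+1}.$$ Then $\{\mathbf{x}_n\}$ converges weakly to a point $\mathbf{x}$ satisfying $0\in\sum_{i=1}^m\mathcal{A}_i\mathbf{x}+\mathcal{B}\mathbf{x}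+\mathcal{C}\mathbf{x}$.
   Context: $J_{T}=(\mathrm{Id}+T)^{-1}$ is the resolvent of a maximally monotone operator $T$. $\beta$-cocoercive means $\langle x-y,\mathcal{C}x-\mathcal{C}y\rangle\ge\beta\|\mathcal{C}x-\mathcal{C}y\|^2$ for all $x,y$. *)

theory Defs
  imports "HOL-Analysis.Analysis"
begin

definition monotone_op :: "('a::real_inner \<Rightarrow> 'a set) \<Rightarrow> bool" where
  "monotone_op A \<longleftrightarrow> (\<forall>x y u v. u \<in> A x \<longrightarrow> v \<in> A y \<longrightarrow> inner (x - y) (u - v) \<ge> 0)"

definition maximal_monotone :: "('a::real_inner \<Rightarrow> 'a set) \<Rightarrow> bool" where
  "maximal_monotone A \<longleftrightarrow> monotone_op A \<and>
     (\<forall>x u. (\<forall>y v. v \<in> A y \<longrightarrow> inner (x - y) (u - v) \<ge> 0) \<longrightarrow> u \<in> A x)"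

definition monotone_fun :: "('a::real_inner \<Rightarrow> 'a) \<Rightarrow> bool" where
  "monotone_fun B \<longleftrightarrow> (\<forall>x y. inner (x - y) (B x - B y) \<ge> 0)"

definition cocoercive :: "real \<Rightarrow> ('a::real_inner \<Rightarrow> 'a) \<Rightarrow> bool" where
  "cocoercive \<beta> C \<longleftrightarrow> (\<forall>x y. inner (x - y) (C x - C y) \<ge> \<beta> * (norm (C x - C y))\<^sup>2)"

definition scale_op :: "real \<Rightarrow> ('a::real_vector \<Rightarrow> 'a set) \<Rightarrow> 'a \<Rightarrow> 'a set" where
  "scale_op c A = (\<lambda>x. (\<lambda>u. c *\<^sub>R u) ` A x)"

text \<open>Resolvent J_A = (Id + A)^{-1}; for maximally monotone A it is single-valued and
  everywhere defined (Minty), so J_A x is the unique p with x \<in> p + A p.\<close>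
definition resolvent :: "('a::real_vector \<Rightarrow> 'a set) \<Rightarrow> 'a \<Rightarrow> 'a" where
  "resolvent A x = (THE p. x - p \<in> A p)"

definition zer_sum :: "nat \<Rightarrow> (nat \<Rightarrow> 'a::real_vector \<Rightarrow> 'a set) \<Rightarrow> ('a \<Rightarrow> 'a) \<Rightarrow> ('a \<Rightarrow> 'a) \<Rightarrow> 'a set" where
  "zer_sum m A B C = {x. \<exists>a. (\<forall>i<m. a i \<in> A i x) \<and> (\<Sum>i<m. a i) + B x + C x = 0}"

definition weakly_converges :: "(nat \<Rightarrow> 'a::real_inner) \<Rightarrow> 'a \<Rightarrow> bool" where
  "weakly_converges s x \<longleftrightarrow> (\<forall>w. (\<lambda>n. inner (s n) w) \<longlonglongrightarrow> inner x w)"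

end

theory Submission
  imports Defs "HOL-Library.Diagonal_Subsequence" "HOL-Library.Infinite_Set"
begin

lemma sc_min:
  fixes bnd :: "'e::{real_inner,complete_space} \<Rightarrow> real \<Rightarrow> bool"
  assumes ex: "bnd p1 t1"
    and lower: "\<And>p t. bnd p t \<Longrightarrow> c \<le> t"
    and k: "k > 0"
    and mid: "\<And>p t p' t'. bnd p t \<Longrightarrow> bnd p' t' \<Longrightarrow>
              bnd ((1/2) *\<^sub>R (p + p')) ((t+t')/2 - k * (norm (p - p'))\<^sup>2)"
    and closed: "\<And>ps ts p0 t0. (\<And>n. bnd (ps n) (ts n)) \<Longrightarrow> ps \<longlonglongrightarrow> p0 \<Longrightarrow> ts \<longlonglongrightarrow> t0 \<Longrightarrow> bnd p0 t0"
  shows "\<exists>p0 \<mu>. bnd p0 \<mu> \<and> (\<forall>p t. bnd p t \<longrightarrow> \<mu> \<le> t)"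
proof -
  define T where "T = {t. \<exists>p. bnd p t}"
  define \<mu> where "\<mu> = Inf T"
  define e :: "nat \<Rightarrow> real" where "e n = 1 / (real n + 1)" for n
  have epos: "e n > 0" for n unfolding e_def by simp
  have Tne: "T \<noteq> {}" using ex T_def by blast
  have bdd: "bdd_below T" unfolding T_def bdd_below_def using lower by blast
  have mule: "\<mu> \<le> t" if "bnd p t" for p t
    unfolding \<mu>_def by (rule cInf_lower) (use that T_def bdd in auto)
  have "\<forall>n. \<exists>p t. bnd p t \<and> t < \<mu> + e n"
  proof
    fix n
    have "Inf T < \<mu> + e n" unfolding \<mu>_def using epos by simp
    from cInf_lessD[OF Tne this] show "\<exists>p t. bnd p t \<and> t < \<mu> + e n"
      unfolding T_def by auto
  qed
  then obtain ps ts where pt: "\<And>n. bnd (ps n) (ts n)" "\<And>n. ts n < \<mu> + e n"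
    by metis
  have dist_bound: "(norm (ps a - ps b))\<^sup>2 \<le> (e a + e b) / (2 * k)" for a b
  proof -
    have "\<mu> \<le> (ts a + ts b)/2 - k * (norm (ps a - ps b))\<^sup>2"
      using mule[OF mid[OF pt(1)[of a] pt(1)[of b]]] .
    hence "\<mu> \<le> ts a / 2 + ts b / 2 - k * (norm (ps a - ps b))\<^sup>2" by (simp add: add_divide_distrib)
    hence "k * (norm (ps a - ps b))\<^sup>2 \<le> e a / 2 + e b / 2"
      using pt(2)[of a] pt(2)[of b] by linarith
    thus ?thesis using k by (simp add: field_simps)
  qed
  have "Cauchy ps"
  proof (rule metric_CauchyI)
    fix r :: real assume r: "r > 0"
    obtain N :: nat where N: "real N > 1 / (k * r\<^sup>2)"
      using reals_Archimedean2 by blast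
    have kr: "k * r\<^sup>2 > 0" using k r by simp
    have Npos: "real N > 0" using N kr
      by (meson divide_pos_pos less_trans zero_less_one)
    have N1: "1 < real N * (k * r\<^sup>2)" using N kr by (simp add: divide_less_eq)
    show "\<exists>M. \<forall>a\<ge>M. \<forall>b\<ge>M. dist (ps a) (ps b) < r"
    proof (intro exI allI impI)
      fix a b assume ab: "a \<ge> N" "b \<ge> N"
      have "e a \<le> 1 / real N" using ab Npos unfolding e_def by (simp add: frac_le)
      moreover have "e b \<le> 1 / real N" using ab Npos unfolding e_def by (simp add: frac_le)
      ultimately have "(e a + e b) / (2 * k) \<le> (2 / real N) / (2 * k)"
        using k by (intro divide_right_mono) auto
      hence "(norm (ps a - ps b))\<^sup>2 \<le> (2 / real N) / (2 * k)"
        using dist_bound[of a b] by linarith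
      also have "\<dots> = 1 / (real N * k)" using k by (simp add: field_simps)
      also have "\<dots> < r\<^sup>2"
      proof -
        have "real N * k > 0" using Npos k by simp
        thus ?thesis using N1 by (simp add: divide_less_eq mult.commute mult.left_commute)
      qed
      finally have "(norm (ps a - ps b))\<^sup>2 < r\<^sup>2" .
      hence "norm (ps a - ps b) < r" using r by (simp add: power_less_imp_less_base)
      thus "dist (ps a) (ps b) < r" by (simp add: dist_norm)
    qed
  qed
  then obtain p0 where p0: "ps \<longlonglongrightarrow> p0" using Cauchy_convergent_iff convergent_def by blast
  have "ts \<longlonglongrightarrow> \<mu>"
  proof (rule tendsto_sandwich[of "\<lambda>n. \<mu>" _ _ "\<lambda>n. \<mu> + e n"])
    show "\<forall>\<^sub>F n in sequentially. \<mu> \<le> ts n" using mule[OF pt(1)] by simp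
    show "\<forall>\<^sub>F n in sequentially. ts n \<le> \<mu> + e n" using pt(2) by (simp add: less_imp_le)
    show "(\<lambda>n. \<mu>) \<longlonglongrightarrow> \<mu>" by simp
    have "e = (\<lambda>n. 1 / (1 + real n))" by (auto simp: e_def add.commute)
    hence "e \<longlonglongrightarrow> 0" using LIMSEQ_inverse_real_of_nat_add[of 0]
      by (simp add: inverse_eq_divide add.commute)
    thus "(\<lambda>n. \<mu> + e n) \<longlonglongrightarrow> \<mu>" using tendsto_add[of "\<lambda>n. \<mu>" \<mu>] by fastforce
  qed
  hence "bnd p0 \<mu>" using closed[OF pt(1) p0] by simp
  thus ?thesis using mule by blast
qed

lemma mm_mono: "maximal_monotone A \<Longrightarrow> u \<in> A x \<Longrightarrow> v \<in> A y \<Longrightarrow> inner (x - y) (u - v) \<ge> 0"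
  unfolding maximal_monotone_def monotone_op_def by blast

lemma mm_max: "maximal_monotone A \<Longrightarrow> (\<And>y v. v \<in> A y \<Longrightarrow> inner (x - y) (u - v) \<ge> 0) \<Longrightarrow> u \<in> A x"
  unfolding maximal_monotone_def by blast

lemma norm_pair_sq: "(norm p)\<^sup>2 = (norm (fst p))\<^sup>2 + (norm (snd p))\<^sup>2"
  for p :: "'a::real_inner \<times> 'b::real_inner"
  by (simp add: power2_norm_eq_inner inner_prod_def)

lemma parallelogram: "(norm (a + b))\<^sup>2 + (norm (a - b))\<^sup>2 = 2 * (norm a)\<^sup>2 + 2 * (norm b)\<^sup>2"
  for a b :: "'a::real_inner"
  by (simp add: power2_norm_eq_inner inner_add inner_diff inner_commute)

lemma half_norm_sq: "(norm ((1/2) *\<^sub>R (a + b)))\<^sup>2 = (norm a)\<^sup>2 / 2 + (norm b)\<^sup>2 / 2 - (norm (a - b))\<^sup>2 / 4"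
  for a b :: "'a::real_inner"
proof -
  have "(norm ((1/2) *\<^sub>R (a + b)))\<^sup>2 = (norm (a + b))\<^sup>2 / 4"
    by (simp add: power_mult_distrib power_divide)
  thus ?thesis using parallelogram[of a b] by simp
qed

lemma norm_add_scale_sq: "(norm (a + t *\<^sub>R b))\<^sup>2 = (norm a)\<^sup>2 + 2 * t * inner a b + t\<^sup>2 * (norm b)\<^sup>2"
  for a b :: "'a::real_inner"
  unfolding power2_norm_eq_inner by (simp add: inner_add inner_commute power2_eq_square algebra_simps)

lemma minty0:
  fixes A :: "'a::{real_inner,complete_space} \<Rightarrow> 'a set"
  assumes mA: "maximal_monotone A"
  shows "\<exists>x. - x \<in> A x"
proof -
  define G where "G = {(y, v). v \<in> A y}"
  define aff :: "'a \<times> 'a \<Rightarrow> 'a \<times> 'a \<Rightarrow> real" where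
    "aff q p = inner (fst p) (snd q) + inner (fst q) (snd p) - inner (fst q) (snd q)" for q p
  define bnd where "bnd p t = (\<forall>q\<in>G. aff q p + (norm p)\<^sup>2 / 2 \<le> t)" for p t
  have aff_le: "aff q' q \<le> inner (fst q) (snd q)" if "q \<in> G" "q' \<in> G" for q q'
  proof -
    have "inner (fst q - fst q') (snd q - snd q') \<ge> 0"
      using mm_mono[OF mA] that unfolding G_def by (auto simp: case_prod_beta)
    thus ?thesis unfolding aff_def by (simp add: inner_diff inner_commute)
  qed
  have Fge: "\<exists>q\<in>G. aff q p \<ge> inner (fst p) (snd p)" for p
  proof (rule ccontr)
    assume "\<not> ?thesis"
    hence lt: "\<forall>q\<in>G. aff q p < inner (fst p) (snd p)" by auto
    have "snd p \<in> A (fst p)"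
    proof (rule mm_max[OF mA])
      fix y v assume "v \<in> A y"
      hence "(y, v) \<in> G" unfolding G_def by simp
      hence "aff (y, v) p < inner (fst p) (snd p)" using lt by blast
      thus "inner (fst p - y) (snd p - v) \<ge> 0" unfolding aff_def
        by (simp add: inner_diff inner_commute)
    qed
    hence "p \<in> G" unfolding G_def by (auto simp: case_prod_beta)
    with lt have "aff p p < inner (fst p) (snd p)" by blast
    thus False unfolding aff_def by simp
  qed
  have Gne: "G \<noteq> {}"
  proof
    assume "G = {}"
    hence "0 \<in> A 0" using mm_max[OF mA, of 0 0] unfolding G_def by auto
    thus False using \<open>G = {}\<close> unfolding G_def by auto
  qed
  then obtain q0 where q0: "q0 \<in> G" by blast
  have aff_lin: "aff q (a *\<^sub>R p + b *\<^sub>R p') = a * aff q p + b * aff q p' + (1 - a - b) * (- inner (fst q) (snd q))"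
    for q p p' a b
    unfolding aff_def by (simp add: inner_add inner_scaleR algebra_simps)
  have ex: "bnd q0 (inner (fst q0) (snd q0) + (norm q0)\<^sup>2 / 2)"
    unfolding bnd_def using aff_le[OF q0] by auto
  have lower: "0 \<le> t" if "bnd p t" for p t
  proof -
    obtain q where q: "q \<in> G" "aff q p \<ge> inner (fst p) (snd p)" using Fge by blast
    have "0 \<le> (norm (fst p + snd p))\<^sup>2 / 2" by simp
    also have "\<dots> = inner (fst p) (snd p) + (norm p)\<^sup>2 / 2"
      by (simp add: norm_pair_sq power2_norm_eq_inner inner_add inner_commute field_simps)
    also have "\<dots> \<le> aff q p + (norm p)\<^sup>2 / 2" using q by simp
    also have "\<dots> \<le> t" using that q unfolding bnd_def by blast
    finally show ?thesis .
  qed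
  have mid: "bnd ((1/2) *\<^sub>R (p + p')) ((t+t')/2 - (1/8) * (norm (p - p'))\<^sup>2)"
    if "bnd p t" "bnd p' t'" for p t p' t'
    unfolding bnd_def
  proof
    fix q assume q: "q \<in> G"
    have h1: "aff q p + (norm p)\<^sup>2 / 2 \<le> t" "aff q p' + (norm p')\<^sup>2 / 2 \<le> t'"
      using that q unfolding bnd_def by auto
    have "aff q ((1/2) *\<^sub>R (p + p')) = (aff q p + aff q p') / 2"
      using aff_lin[of q "1/2" p "1/2" p'] by (simp add: scaleR_add_right add_divide_distrib)
    moreover have "(norm ((1/2) *\<^sub>R (p + p')))\<^sup>2 / 2 = (norm p)\<^sup>2 / 4 + (norm p')\<^sup>2 / 4 - (norm (p - p'))\<^sup>2 / 8"
      using half_norm_sq[of p p'] by simp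
    ultimately show "aff q ((1/2) *\<^sub>R (p + p')) + (norm ((1/2) *\<^sub>R (p + p')))\<^sup>2 / 2
        \<le> (t+t')/2 - (1/8) * (norm (p - p'))\<^sup>2"
      using h1 by (simp add: add_divide_distrib diff_divide_distrib)
  qed
  have closed: "bnd p0 t0" if "\<And>n. bnd (ps n) (ts n)" "ps \<longlonglongrightarrow> p0" "ts \<longlonglongrightarrow> t0" for ps ts p0 t0
    unfolding bnd_def
  proof
    fix q assume q: "q \<in> G"
    have "(\<lambda>n. aff q (ps n) + (norm (ps n))\<^sup>2 / 2) \<longlonglongrightarrow> aff q p0 + (norm p0)\<^sup>2 / 2"
      unfolding aff_def by (intro tendsto_intros that(2)) simp
    thus "aff q p0 + (norm p0)\<^sup>2 / 2 \<le> t0"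
      using that(1,3) q unfolding bnd_def by (meson LIMSEQ_le)
  qed
  have "\<exists>p0 \<mu>. bnd p0 \<mu> \<and> (\<forall>p t. bnd p t \<longrightarrow> \<mu> \<le> t)"
    by (rule sc_min[OF ex lower _ mid closed]) simp_all
  then obtain p0 \<mu> where p0: "bnd p0 \<mu>" and mumin: "\<And>p t. bnd p t \<Longrightarrow> \<mu> \<le> t"
    by blast
  define x0 where "x0 = fst p0"
  define u0 where "u0 = snd p0"
  define F0 where "F0 = \<mu> - (norm p0)\<^sup>2 / 2"
  have F0ge: "F0 \<ge> inner x0 u0"
  proof -
    obtain q where q: "q \<in> G" "aff q p0 \<ge> inner (fst p0) (snd p0)" using Fge by blast
    have "aff q p0 + (norm p0)\<^sup>2 / 2 \<le> \<mu>" using p0 q(1) unfolding bnd_def by blast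
    thus ?thesis using q(2) unfolding F0_def x0_def u0_def by linarith
  qed
  have Kge: "inner (fst q) (snd q) - F0 + inner p0 (q - p0) \<ge> 0" if q: "q \<in> G" for q
  proof -
    define K where "K = inner (fst q) (snd q) - F0 + inner p0 (q - p0)"
    define D where "D = (norm (q - p0))\<^sup>2"
    have D0: "D \<ge> 0" unfolding D_def by simp
    have step: "0 \<le> K + t * D / 2" if t: "0 < t" "t \<le> 1" for t
    proof -
      define pt where "pt = p0 + t *\<^sub>R (q - p0)"
      have pt_eq: "pt = (1 - t) *\<^sub>R p0 + t *\<^sub>R q" unfolding pt_def by (simp add: algebra_simps)
      have "bnd pt ((1 - t) * F0 + t * inner (fst q) (snd q) + (norm pt)\<^sup>2 / 2)"
        unfolding bnd_def
      proof
        fix q' assume q': "q' \<in> G"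
        have "aff q' pt = (1 - t) * aff q' p0 + t * aff q' q"
          using aff_lin[of q' "1 - t" p0 t q] by (simp add: pt_eq)
        moreover have "aff q' p0 \<le> F0"
        proof -
          have "aff q' p0 + (norm p0)\<^sup>2 / 2 \<le> \<mu>" using p0 q' unfolding bnd_def by blast
          thus ?thesis unfolding F0_def by linarith
        qed
        moreover have "aff q' q \<le> inner (fst q) (snd q)" using aff_le[OF q q'] .
        moreover have "(1 - t) * aff q' p0 \<le> (1 - t) * F0"
          using calculation(2) t by (intro mult_left_mono) auto
        moreover have "t * aff q' q \<le> t * inner (fst q) (snd q)"
          using calculation(3) t by (intro mult_left_mono) auto
        ultimately have "aff q' pt \<le> (1 - t) * F0 + t * inner (fst q) (snd q)"
          by linarith
        thus "aff q' pt + (norm pt)\<^sup>2 / 2 \<le> (1 - t) * F0 + t * inner (fst q) (snd q) + (norm pt)\<^sup>2 / 2"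
          by simp
      qed
      hence "\<mu> \<le> (1 - t) * F0 + t * inner (fst q) (snd q) + (norm pt)\<^sup>2 / 2" by (rule mumin)
      moreover have "(norm pt)\<^sup>2 = (norm p0)\<^sup>2 + 2 * t * inner p0 (q - p0) + t\<^sup>2 * D"
        unfolding pt_def D_def by (rule norm_add_scale_sq)
      moreover have "t * K = t * inner (fst q) (snd q) - t * F0 + t * inner p0 (q - p0)"
        unfolding K_def by (simp add: algebra_simps)
      moreover have "(1 - t) * F0 = F0 - t * F0" by (simp add: algebra_simps)
      ultimately have "0 \<le> t * K + t\<^sup>2 * D / 2"
        unfolding F0_def by linarith
      hence "0 \<le> t * (K + t * D / 2)" by (simp add: algebra_simps power2_eq_square)
      thus ?thesis using t by (simp add: zero_le_mult_iff)
    qed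
    show ?thesis
    proof (rule ccontr)
      assume "\<not> ?thesis"
      hence Kneg: "K < 0" unfolding K_def by simp
      define t where "t = min 1 (- K / (D + 1))"
      have "- K / (D + 1) > 0" using Kneg D0 by (intro divide_pos_pos) auto
      hence t0: "0 < t" "t \<le> 1" unfolding t_def by auto
      have "t \<le> - K / (D + 1)" unfolding t_def by linarith
      hence "t * D \<le> (- K / (D + 1)) * D" using D0 by (rule mult_right_mono)
      also have "\<dots> < - K" using Kneg D0 by (simp add: field_simps)
      finally have "t * D / 2 < - K" using Kneg by simp
      with step[OF t0] show False by simp
    qed
  qed
  have key: "inner (u0 + y) (x0 + v) \<ge> (norm (x0 + u0))\<^sup>2" if "v \<in> A y" for y v
  proof -
    have "(y, v) \<in> G" using that G_def by simp
    from Kge[OF this] have "inner y v - F0 + inner p0 ((y, v) - p0) \<ge> 0" by simp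
    moreover have "inner p0 ((y, v) - p0) = inner x0 (y - x0) + inner u0 (v - u0)"
      unfolding x0_def u0_def by (simp add: inner_prod_def)
    ultimately have "inner y v + inner x0 y + inner u0 v \<ge> F0 + inner x0 x0 + inner u0 u0"
      by (simp add: inner_diff)
    thus ?thesis using F0ge
      by (simp add: power2_norm_eq_inner inner_add inner_commute)
  qed
  have mem: "- x0 \<in> A (- u0)"
  proof (rule mm_max[OF mA])
    fix y v assume "v \<in> A y"
    from key[OF this] have "inner (u0 + y) (x0 + v) \<ge> 0"
      by (meson order_trans zero_le_power2)
    thus "inner (- u0 - y) (- x0 - v) \<ge> 0"
    proof -
      have "- u0 - y = - (u0 + y)" "- x0 - v = - (x0 + v)" by simp_all
      hence "inner (- u0 - y) (- x0 - v) = inner (u0 + y) (x0 + v)"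
        by (simp only: inner_minus_left inner_minus_right minus_minus)
      thus ?thesis using \<open>inner (u0 + y) (x0 + v) \<ge> 0\<close> by simp
    qed
  qed
  from key[OF mem] have "(norm (x0 + u0))\<^sup>2 \<le> 0" by simp
  hence "x0 + u0 = 0" by simp
  hence "u0 = - x0" by (simp add: eq_neg_iff_add_eq_0 add.commute)
  with mem show ?thesis by auto
qed

lemma mm_scale:
  assumes mA: "maximal_monotone A" and c: "c > 0"
  shows "maximal_monotone (scale_op c A)"
  unfolding maximal_monotone_def monotone_op_def
proof (intro conjI allI impI)
  fix x y u v assume "u \<in> scale_op c A x" "v \<in> scale_op c A y"
  then obtain a b where ab: "a \<in> A x" "b \<in> A y" "u = c *\<^sub>R a" "v = c *\<^sub>R b"
    unfolding scale_op_def by auto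
  have "inner (x - y) (u - v) = c * inner (x - y) (a - b)"
    using ab by (simp add: scaleR_diff_right[symmetric])
  thus "0 \<le> inner (x - y) (u - v)" using mm_mono[OF mA ab(1,2)] c by simp
next
  fix x u assume H: "\<forall>y v. v \<in> scale_op c A y \<longrightarrow> 0 \<le> inner (x - y) (u - v)"
  have "(1/c) *\<^sub>R u \<in> A x"
  proof (rule mm_max[OF mA])
    fix y b assume "b \<in> A y"
    hence "c *\<^sub>R b \<in> scale_op c A y" unfolding scale_op_def by auto
    hence "0 \<le> inner (x - y) (u - c *\<^sub>R b)" using H by blast
    moreover have "inner (x - y) (u - c *\<^sub>R b) = c * inner (x - y) ((1/c) *\<^sub>R u - b)"
      using c by (simp add: inner_diff_right right_diff_distrib)
    ultimately show "0 \<le> inner (x - y) ((1/c) *\<^sub>R u - b)" using c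
      by (simp add: zero_le_mult_iff)
  qed
  thus "u \<in> scale_op c A x" unfolding scale_op_def
    by (rule rev_image_eqI) (use c in simp)
qed

lemma mm_shift:
  assumes mA: "maximal_monotone A"
  shows "maximal_monotone (\<lambda>x. (\<lambda>a. a - w) ` A x)"
  unfolding maximal_monotone_def monotone_op_def
proof (intro conjI allI impI)
  fix x y u v assume "u \<in> (\<lambda>a. a - w) ` A x" "v \<in> (\<lambda>a. a - w) ` A y"
  then obtain a b where ab: "a \<in> A x" "b \<in> A y" "u = a - w" "v = b - w" by auto
  thus "0 \<le> inner (x - y) (u - v)" using mm_mono[OF mA ab(1,2)] by simp
next
  fix x u assume H: "\<forall>y v. v \<in> (\<lambda>a. a - w) ` A y \<longrightarrow> 0 \<le> inner (x - y) (u - v)"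
  have "u + w \<in> A x"
  proof (rule mm_max[OF mA])
    fix y b assume "b \<in> A y"
    hence "b - w \<in> (\<lambda>a. a - w) ` A y" by auto
    hence "0 \<le> inner (x - y) (u - (b - w))" using H by blast
    thus "0 \<le> inner (x - y) (u + w - b)" by (simp add: algebra_simps)
  qed
  thus "u \<in> (\<lambda>a. a - w) ` A x" by (auto intro: image_eqI[of _ _ "u + w"])
qed

lemma minty:
  fixes A :: "'a::{real_inner,complete_space} \<Rightarrow> 'a set"
  assumes mA: "maximal_monotone A"
  shows "\<exists>x. w - x \<in> A x"
proof -
  obtain x where "- x \<in> (\<lambda>a. a - w) ` A x" using minty0[OF mm_shift[OF mA]] by blast
  then obtain a where "a \<in> A x" "- x = a - w" by auto
  hence "w - x \<in> A x" by (metis add_diff_cancel_left' diff_add_cancel diff_minus_eq_add minus_diff_eq)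
  thus ?thesis by blast
qed

lemma resolvent_unique:
  assumes mA: "monotone_op A" and "w - p \<in> A p" "w - p' \<in> A p'"
  shows "p = p'"
proof -
  have "inner (p - p') ((w - p) - (w - p')) \<ge> 0" using assms unfolding monotone_op_def by blast
  moreover have "inner (p - p') ((w - p) - (w - p')) = - inner (p - p') (p - p')"
    by (simp add: inner_diff_right)
  ultimately have "inner (p - p') (p - p') \<le> 0" by linarith
  hence "inner (p - p') (p - p') = 0" using inner_ge_zero[of "p - p'"] by linarith
  thus ?thesis by simp
qed

lemma resolvent_char:
  fixes A :: "'a::{real_inner,complete_space} \<Rightarrow> 'a set"
  assumes mA: "maximal_monotone A"
  shows "w - resolvent A w \<in> A (resolvent A w)"
proof -
  obtain p where p: "w - p \<in> A p" using minty[OF mA] by blast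
  have "resolvent A w = p" unfolding resolvent_def
  proof (rule the_equality)
    show "w - p \<in> A p" by fact
    fix p' assume "w - p' \<in> A p'"
    thus "p' = p" using resolvent_unique[of A w p' p] p mA unfolding maximal_monotone_def by blast
  qed
  thus ?thesis using p by simp
qed

lemma resolvent_scale:
  fixes A :: "'a::{real_inner,complete_space} \<Rightarrow> 'a set"
  assumes mA: "maximal_monotone A" and c: "c > 0" and y: "y = resolvent (scale_op c A) w"
  shows "\<exists>a \<in> A y. w = y + c *\<^sub>R a"
proof -
  have "w - y \<in> scale_op c A y" using resolvent_char[OF mm_scale[OF mA c]] y by simp
  then obtain a where "a \<in> A y" "w - y = c *\<^sub>R a" unfolding scale_op_def by auto
  thus ?thesis by (metis add.commute diff_add_cancel)
qed

lemma minty_scale: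
  fixes A :: "'a::{real_inner,complete_space} \<Rightarrow> 'a set"
  assumes mA: "maximal_monotone A" and c: "c > 0"
  shows "\<exists>p. \<exists>a\<in>A p. w = p + c *\<^sub>R a"
  using resolvent_scale[OF mA c refl] by blast

lemma proj_subspace:
  fixes S :: "'a::{real_inner,complete_space} set"
  assumes S0: "0 \<in> S" and Sadd: "\<And>x y. x \<in> S \<Longrightarrow> y \<in> S \<Longrightarrow> x + y \<in> S"
    and Sscale: "\<And>x c. x \<in> S \<Longrightarrow> c *\<^sub>R x \<in> S" and Scl: "closed S"
  shows "\<exists>c\<in>S. \<forall>s\<in>S. inner (w - c) s = 0"
proof -
  define bnd where "bnd p t = (p \<in> S \<and> (norm (w - p))\<^sup>2 \<le> t)" for p t
  have ex: "bnd 0 ((norm w)\<^sup>2)" unfolding bnd_def using S0 by simp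
  have lower: "0 \<le> t" if "bnd p t" for p t using that unfolding bnd_def
    by (meson order_trans zero_le_power2)
  have mid: "bnd ((1/2) *\<^sub>R (p + p')) ((t+t')/2 - (1/4) * (norm (p - p'))\<^sup>2)"
    if "bnd p t" "bnd p' t'" for p t p' t'
  proof -
    have inS: "(1/2) *\<^sub>R (p + p') \<in> S" using that Sadd Sscale unfolding bnd_def by blast
    have e: "w - (1/2) *\<^sub>R (p + p') = (1/2) *\<^sub>R ((w - p) + (w - p'))"
      by (simp add: algebra_simps flip: scaleR_add_left)
    have "(norm (w - (1/2) *\<^sub>R (p + p')))\<^sup>2 = (norm (w - p))\<^sup>2 / 2 + (norm (w - p'))\<^sup>2 / 2 - (norm (p - p'))\<^sup>2 / 4"
      unfolding e half_norm_sq by (simp add: norm_minus_commute)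
    thus ?thesis using that inS unfolding bnd_def by (simp add: add_divide_distrib)
  qed
  have closed: "bnd p0 t0" if "\<And>n. bnd (ps n) (ts n)" "ps \<longlonglongrightarrow> p0" "ts \<longlonglongrightarrow> t0" for ps ts p0 t0
  proof -
    have "p0 \<in> S" using Scl that(1,2) unfolding bnd_def closed_sequential_limits by blast
    moreover have "(\<lambda>n. (norm (w - ps n))\<^sup>2) \<longlonglongrightarrow> (norm (w - p0))\<^sup>2"
      by (intro tendsto_intros that(2))
    hence "(norm (w - p0))\<^sup>2 \<le> t0" using that(1,3) unfolding bnd_def by (meson LIMSEQ_le)
    ultimately show ?thesis unfolding bnd_def by simp
  qed
  have "\<exists>p0 \<mu>. bnd p0 \<mu> \<and> (\<forall>p t. bnd p t \<longrightarrow> \<mu> \<le> t)"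
    by (rule sc_min[OF ex lower _ mid closed]) simp_all
  then obtain c \<mu> where c: "bnd c \<mu>" and mumin: "\<And>p t. bnd p t \<Longrightarrow> \<mu> \<le> t"
    by blast
  have cS: "c \<in> S" using c bnd_def by simp
  have "inner (w - c) s = 0" if s: "s \<in> S" for s
  proof -
    define a where "a = inner (w - c) s"
    define S2 where "S2 = (norm s)\<^sup>2"
    define \<tau> where "\<tau> = a / (S2 + 1)"
    have S2: "S2 \<ge> 0" unfolding S2_def by simp
    have a_eq: "a = \<tau> * (S2 + 1)" unfolding \<tau>_def using S2 by simp
    have "c + \<tau> *\<^sub>R s \<in> S" using cS s Sadd Sscale by blast
    hence "bnd (c + \<tau> *\<^sub>R s) ((norm (w - (c + \<tau> *\<^sub>R s)))\<^sup>2)" unfolding bnd_def by simp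
    hence "\<mu> \<le> (norm (w - (c + \<tau> *\<^sub>R s)))\<^sup>2" by (rule mumin)
    moreover have "(norm (w - (c + \<tau> *\<^sub>R s)))\<^sup>2 = (norm (w - c))\<^sup>2 + 2 * (- \<tau>) * a + (- \<tau>)\<^sup>2 * S2"
      using norm_add_scale_sq[of "w - c" "- \<tau>" s] unfolding a_def S2_def
      by (simp add: algebra_simps)
    moreover have "(norm (w - c))\<^sup>2 \<le> \<mu>" using c bnd_def by simp
    ultimately have "0 \<le> 2 * (- \<tau>) * a + (- \<tau>)\<^sup>2 * S2" by linarith
    also have "\<dots> = - (\<tau>\<^sup>2 * (S2 + 2))" unfolding a_eq by (simp add: power2_eq_square algebra_simps)
    finally have "\<tau>\<^sup>2 * (S2 + 2) \<le> 0" by simp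
    moreover have "S2 + 2 > 0" using S2 by simp
    ultimately have "\<tau>\<^sup>2 \<le> 0" by (simp add: mult_le_0_iff)
    hence "\<tau> = 0" by simp
    thus ?thesis using a_eq a_def by simp
  qed
  thus ?thesis using cS by blast
qed

lemma riesz:
  fixes f :: "'a::{real_inner,complete_space} \<Rightarrow> real"
  assumes fadd: "\<And>x y. f (x + y) = f x + f y" and fscale: "\<And>c x. f (c *\<^sub>R x) = c * f x"
    and fbd: "\<And>x. \<bar>f x\<bar> \<le> K * norm x"
  shows "\<exists>z. \<forall>x. f x = inner z x"
proof (cases "\<forall>x. f x = 0")
  case True thus ?thesis by (intro exI[of _ 0]) simp
next
  case False
  then obtain w0 where w0: "f w0 \<noteq> 0" by blast
  have bl: "bounded_linear f"
    by (rule bounded_linear_intro[of f K]) (use fadd fscale fbd in \<open>auto simp: mult.commute\<close>)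
  have f0: "f 0 = 0" using fscale[of 0 0] by simp
  have fdiff: "f (x - y) = f x - f y" for x y
    using fadd[of x "(-1) *\<^sub>R y"] fscale[of "-1" y] by simp
  define N where "N = {x. f x = 0}"
  have N0: "0 \<in> N" using f0 N_def by simp
  have Nadd: "x \<in> N \<Longrightarrow> y \<in> N \<Longrightarrow> x + y \<in> N" for x y using fadd N_def by simp
  have Nscale: "x \<in> N \<Longrightarrow> c *\<^sub>R x \<in> N" for x c using fscale N_def by simp
  have Ncl: "closed N" unfolding closed_sequential_limits
  proof (intro allI impI)
    fix xs l assume H: "(\<forall>n. xs n \<in> N) \<and> xs \<longlonglongrightarrow> l"
    have "(\<lambda>n. f (xs n)) \<longlonglongrightarrow> f l" using bounded_linear.tendsto[OF bl] H by blast
    moreover have "(\<lambda>n. f (xs n)) = (\<lambda>n. 0)" using H N_def by auto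
    ultimately have "f l = 0" using LIMSEQ_unique tendsto_const by metis
    thus "l \<in> N" using N_def by simp
  qed
  obtain c where c: "c \<in> N" "\<forall>s\<in>N. inner (w0 - c) s = 0"
    using proj_subspace[OF N0 Nadd Nscale Ncl] by blast
  define e where "e = w0 - c"
  have fe: "f e = f w0" unfolding e_def using fdiff c(1) N_def by simp
  hence e0: "e \<noteq> 0" using w0 f0 by auto
  have "f x = inner ((f e / inner e e) *\<^sub>R e) x" for x
  proof -
    define s where "s = x - (f x / f e) *\<^sub>R e"
    have "f s = 0" unfolding s_def using fdiff fscale fe w0 by simp
    hence "inner e s = 0" using c(2) N_def e_def by simp
    hence "inner e x = (f x / f e) * inner e e" unfolding s_def by (simp add: inner_diff_right)
    thus ?thesis using e0 fe w0 by (simp add: field_simps)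
  qed
  thus ?thesis by blast
qed

lemma weak_subseq:
  assumes "weakly_converges s x" "strict_mono h"
  shows "weakly_converges (\<lambda>k. s (h k)) x"
  using assms LIMSEQ_subseq_LIMSEQ unfolding weakly_converges_def o_def by blast

lemma wcomp:
  fixes u :: "nat \<Rightarrow> 'a::{real_inner,complete_space}"
  assumes bd: "\<And>n. norm (u n) \<le> M"
  shows "\<exists>g z. strict_mono g \<and> weakly_converges (\<lambda>k. u (g k)) z"
proof -
  have M0: "M \<ge> 0" using bd[of 0] norm_ge_zero order_trans by blast
  have ibd: "\<bar>inner (u a) x\<bar> \<le> M * norm x" for a x
    using Cauchy_Schwarz_ineq2[of "u a" x] bd[of a] by (meson mult_right_mono norm_ge_zero order_trans)
  define P where "P j s = convergent (\<lambda>k. inner (u (s k)) (u j))" for j and s :: "nat \<Rightarrow> nat"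
  interpret S: subseqs P
  proof
    fix j and s :: "nat \<Rightarrow> nat" assume "strict_mono s"
    define X where "X k = inner (u (s k)) (u j)" for k
    obtain r where r: "strict_mono r" "monoseq (\<lambda>n. X (r n))" using seq_monosub by blast
    have "Bseq (\<lambda>n. X (r n))"
      by (rule BseqI'[of _ "M * norm (u j)"]) (use ibd in \<open>simp add: X_def\<close>)
    hence "convergent (\<lambda>n. X (r n))" using r(2) Bseq_monoseq_convergent by blast
    thus "\<exists>r'. strict_mono r' \<and> P j (s \<circ> r')" using r(1) unfolding P_def X_def o_def by blast
  qed
  define g where "g = S.diagseq"
  have g: "strict_mono g" unfolding g_def by (rule S.subseq_diagseq)
  define v where "v k = u (g k)" for k
  have vj: "convergent (\<lambda>k. inner (v k) (u j))" for j
  proof -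
    have "P j (S.diagseq \<circ> ((+) (Suc j)))"
    proof (rule S.diagseq_holds)
      fix r s n assume "strict_mono (r :: nat \<Rightarrow> nat)" "P n s"
      thus "P n (s \<circ> r)" unfolding P_def using convergent_subseq_convergent[of _ r]
        by (auto simp: o_def)
    qed
    hence "convergent (\<lambda>k. inner (u (S.diagseq (k + Suc j))) (u j))"
      unfolding P_def by (simp add: o_def add.commute)
    thus ?thesis unfolding v_def g_def using convergent_ignore_initial_segment by blast
  qed
  have vbd: "\<bar>inner (v k) x\<bar> \<le> M * norm x" for k x unfolding v_def by (rule ibd)
  define C where "C = {w. convergent (\<lambda>k. inner (v k) w)}"
  have C0: "0 \<in> C" unfolding C_def by (simp add: convergent_const)
  have Cadd: "x + y \<in> C" if "x \<in> C" "y \<in> C" for x y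
    using that unfolding C_def by (simp add: inner_add_right convergent_add)
  have Cscale: "c *\<^sub>R x \<in> C" if "x \<in> C" for x c
    using that unfolding C_def convergent_def by (auto intro: tendsto_mult_left)
  have Ccl: "closed C" unfolding closed_sequential_limits
  proof (intro allI impI)
    fix ws w assume H: "(\<forall>n. ws n \<in> C) \<and> ws \<longlonglongrightarrow> w"
    have "Cauchy (\<lambda>k. inner (v k) w)"
    proof (rule metric_CauchyI)
      fix e :: real assume e: "e > 0"
      define d where "d = e / (3 * (M + 1))"
      have d: "d > 0" unfolding d_def using e M0 by simp
      obtain n where n: "norm (ws n - w) < d"
        using H d unfolding LIMSEQ_iff by blast
      have "Cauchy (\<lambda>k. inner (v k) (ws n))" using H unfolding C_def using convergent_Cauchy by blast
      then obtain N where N: "\<forall>a\<ge>N. \<forall>b\<ge>N. dist (inner (v a) (ws n)) (inner (v b) (ws n)) < e / 3"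
        using e unfolding Cauchy_def by (meson divide_pos_pos zero_less_numeral)
      have Md: "M * d < e / 3" unfolding d_def using e M0 by (simp add: field_simps)
      show "\<exists>N. \<forall>a\<ge>N. \<forall>b\<ge>N. dist (inner (v a) w) (inner (v b) w) < e"
      proof (intro exI allI impI)
        fix a b assume ab: "a \<ge> N" "b \<ge> N"
        have t1: "\<bar>inner (v a) (w - ws n)\<bar> \<le> M * d"
          using vbd[of a "w - ws n"] n M0 by (smt (verit, best) mult_left_mono norm_minus_commute)
        have t2: "\<bar>inner (v b) (w - ws n)\<bar> \<le> M * d"
          using vbd[of b "w - ws n"] n M0 by (smt (verit, best) mult_left_mono norm_minus_commute)
        have t3: "\<bar>inner (v a) (ws n) - inner (v b) (ws n)\<bar> < e / 3" using N ab by (simp add: dist_real_def)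
        have "inner (v a) w - inner (v b) w = inner (v a) (w - ws n) + (inner (v a) (ws n) - inner (v b) (ws n)) - inner (v b) (w - ws n)"
          by (simp add: inner_diff_right)
        hence "\<bar>inner (v a) w - inner (v b) w\<bar> < e" using t1 t2 t3 Md by linarith
        thus "dist (inner (v a) w) (inner (v b) w) < e" by (simp add: dist_real_def)
      qed
    qed
    thus "w \<in> C" unfolding C_def using Cauchy_convergent_iff by blast
  qed
  have vC: "v k \<in> C" for k
  proof -
    have "u (g k) \<in> C" unfolding C_def using vj by blast
    thus ?thesis unfolding v_def .
  qed
  have allC: "w \<in> C" for w
  proof -
    obtain c where c: "c \<in> C" "\<forall>s\<in>C. inner (w - c) s = 0" using proj_subspace[OF C0 Cadd Cscale Ccl] by blast
    have "inner (v k) w = inner (v k) c" for k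
    proof -
      have "inner (w - c) (v k) = 0" using c(2) vC by blast
      hence "inner (v k) (w - c) = 0" by (simp add: inner_commute)
      thus ?thesis by (simp add: inner_diff_right)
    qed
    thus ?thesis using c(1) unfolding C_def by simp
  qed
  define f where "f w = lim (\<lambda>k. inner (v k) w)" for w
  have flim: "(\<lambda>k. inner (v k) w) \<longlonglongrightarrow> f w" for w
    using allC[of w] unfolding C_def f_def by (simp add: convergent_LIMSEQ_iff)
  have fadd: "f (x + y) = f x + f y" for x y
  proof -
    have "(\<lambda>k. inner (v k) (x + y)) \<longlonglongrightarrow> f x + f y"
      using tendsto_add[OF flim[of x] flim[of y]] by (simp add: inner_add_right)
    thus ?thesis using flim LIMSEQ_unique by blast
  qed
  have fscale: "f (c *\<^sub>R x) = c * f x" for c x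
  proof -
    have "(\<lambda>k. inner (v k) (c *\<^sub>R x)) \<longlonglongrightarrow> c * f x"
      using tendsto_mult_left[OF flim[of x], of c] by simp
    thus ?thesis using flim LIMSEQ_unique by blast
  qed
  have fbd: "\<bar>f x\<bar> \<le> M * norm x" for x
  proof -
    have "(\<lambda>k. \<bar>inner (v k) x\<bar>) \<longlonglongrightarrow> \<bar>f x\<bar>" using tendsto_rabs[OF flim] .
    thus ?thesis using vbd by (meson LIMSEQ_le_const2)
  qed
  obtain z where z: "\<And>x. f x = inner z x" using riesz[OF fadd fscale fbd] by blast
  have "weakly_converges v z" unfolding weakly_converges_def
  proof
    fix w show "(\<lambda>n. inner (v n) w) \<longlonglongrightarrow> inner z w" using flim[of w] z by simp
  qed
  thus ?thesis using g unfolding v_def by blast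
qed

lemma wcomp_multi:
  fixes u :: "nat \<Rightarrow> nat \<Rightarrow> 'a::{real_inner,complete_space}"
  assumes "\<And>n i. i < m \<Longrightarrow> norm (u n i) \<le> M"
  shows "\<exists>g z. strict_mono g \<and> (\<forall>i<m. weakly_converges (\<lambda>k. u (g k) i) (z i))"
  using assms
proof (induction m)
  case 0
  show ?case by (rule exI[of _ id]) (simp add: strict_mono_def)
next
  case (Suc m)
  then obtain g z where gz: "strict_mono g" "\<forall>i<m. weakly_converges (\<lambda>k. u (g k) i) (z i)"
    by (meson less_SucI)
  have "norm (u (g k) m) \<le> M" for k using Suc.prems by simp
  then obtain h zm where h: "strict_mono h" "weakly_converges (\<lambda>k. u (g (h k)) m) zm"
    using wcomp[of "\<lambda>k. u (g k) m" M] by blast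
  have "strict_mono (g \<circ> h)" using gz(1) h(1) by (rule strict_mono_o)
  moreover have "\<forall>i<Suc m. weakly_converges (\<lambda>k. u ((g \<circ> h) k) i) ((z(m := zm)) i)"
  proof (intro allI impI)
    fix i assume "i < Suc m"
    show "weakly_converges (\<lambda>k. u ((g \<circ> h) k) i) ((z(m := zm)) i)"
    proof (cases "i = m")
      case True thus ?thesis using h(2) by simp
    next
      case False
      hence "i < m" using \<open>i < Suc m\<close> by simp
      thus ?thesis using weak_subseq[OF gz(2)[rule_format, OF \<open>i < m\<close>] h(1)] False by simp
    qed
  qed
  ultimately show ?case by blast
qed

lemma I1_alg:
  fixes p r e G :: "'a::real_inner"
  assumes "0 \<le> inner (p + r) (p - (e + r) - g *\<^sub>R G)"
  shows "(norm (e + r))\<^sup>2 \<le> (norm e)\<^sup>2 - (norm r)\<^sup>2 + 2 * inner p (p - e) - 2 * g * inner (p + r) G"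
proof -
  have h1: "inner (p + r) (p - (e + r) - g *\<^sub>R G) = inner p p - inner p e - inner p r - g * inner p G
      + inner r p - inner r e - inner r r - g * inner r G"
    by (simp add: inner_add inner_diff algebra_simps)
  have h2: "(norm (e + r))\<^sup>2 = inner e e + 2 * inner e r + inner r r"
    by (simp add: power2_norm_eq_inner inner_add inner_commute)
  have h3: "(norm e)\<^sup>2 = inner e e" "(norm r)\<^sup>2 = inner r r" by (simp_all add: power2_norm_eq_inner)
  have h4: "inner p (p - e) = inner p p - inner p e" "inner (p + r) G = inner p G + inner r G"
    by (simp_all add: inner_add inner_diff)
  have h5: "inner r p = inner p r" "inner r e = inner e r" by (simp_all add: inner_commute)
  show ?thesis using assms h1 h2 h3 h4 h5 by (simp add: algebra_simps)
qed

lemma young: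
  fixes u v :: "'a::real_inner"
  assumes b: "b > 0"
  shows "2 * inner u v \<le> (norm u)\<^sup>2 / (2 * b) + 2 * b * (norm v)\<^sup>2"
proof -
  have "0 \<le> (norm (u - (2 * b) *\<^sub>R v))\<^sup>2" by simp
  also have "\<dots> = (norm u)\<^sup>2 - 4 * b * inner u v + 4 * b\<^sup>2 * (norm v)\<^sup>2"
    using norm_add_scale_sq[of u "- (2 * b)" v] by (simp add: power2_eq_square algebra_simps)
  finally have "4 * b * inner u v \<le> (norm u)\<^sup>2 + 4 * b\<^sup>2 * (norm v)\<^sup>2" by simp
  hence "2 * b * (2 * inner u v) \<le> 2 * b * ((norm u)\<^sup>2 / (2 * b) + 2 * b * (norm v)\<^sup>2)"
    using b by (simp add: algebra_simps power2_eq_square)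
  thus ?thesis using b by (simp add: mult_le_cancel_left_pos)
qed

lemma amgm_lip:
  fixes u v w :: "'a::real_inner"
  assumes "norm v \<le> L * norm w" "L \<ge> 0"
  shows "2 * inner u v \<le> L * ((norm u)\<^sup>2 + (norm w)\<^sup>2)"
proof -
  have "inner u v \<le> norm u * norm v" by (rule norm_cauchy_schwarz)
  also have "\<dots> \<le> norm u * (L * norm w)" using assms by (simp add: mult_left_mono)
  finally have "2 * inner u v \<le> L * (2 * norm u * norm w)" by (simp add: algebra_simps)
  also have "\<dots> \<le> L * ((norm u)\<^sup>2 + (norm w)\<^sup>2)"
  proof -
    have "2 * norm u * norm w \<le> (norm u)\<^sup>2 + (norm w)\<^sup>2"
      using sum_squares_bound[of "norm u" "norm w"] by simp
    thus ?thesis using assms(2) by (simp add: mult_left_mono)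
  qed
  finally show ?thesis .
qed

lemma BC_alg:
  fixes a b c0 xs :: "'a::real_inner" and B C :: "'a \<Rightarrow> 'a"
  assumes mono: "0 \<le> inner (a - xs) (B a - B xs)"
    and lipb: "norm (B b - B c0) \<le> L * norm (b - c0)"
    and coc: "bt * (norm (C b - C xs))\<^sup>2 \<le> inner (b - xs) (C b - C xs)"
    and g: "g > 0" and bt: "bt > 0" and L: "L \<ge> 0"
  shows "- 2 * g * inner (a - xs) (2 *\<^sub>R B b - B c0 + C b - (B xs + C xs))
    \<le> 2 * g * inner (a - xs) (B a - B b) - 2 * g * inner (b - xs) (B b - B c0)
      + (g * L + g / (2 * bt)) * (norm (a - b))\<^sup>2 + g * L * (norm (b - c0))\<^sup>2"
proof -
  have v: "2 *\<^sub>R B b - B c0 + C b - (B xs + C xs) = (B a - B xs) - (B a - B b) + (B b - B c0) + (C b - C xs)"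
    by (simp add: algebra_simps scaleR_2)
  have h1: "inner (a - xs) (2 *\<^sub>R B b - B c0 + C b - (B xs + C xs)) =
     inner (a - xs) (B a - B xs) - inner (a - xs) (B a - B b) + inner (a - xs) (B b - B c0) + inner (a - xs) (C b - C xs)"
    unfolding v by (simp add: inner_add_right inner_diff_right)
  have h2: "inner (a - xs) (B b - B c0) = inner (b - xs) (B b - B c0) + inner (a - b) (B b - B c0)"
    by (simp add: inner_diff_left)
  have h3: "inner (a - xs) (C b - C xs) = inner (b - xs) (C b - C xs) + inner (a - b) (C b - C xs)"
    by (simp add: inner_diff_left)
  have h4: "2 * inner (- (a - b)) (B b - B c0) \<le> L * ((norm (a - b))\<^sup>2 + (norm (b - c0))\<^sup>2)"
    using amgm_lip[OF lipb L, of "- (a - b)"] by (simp add: norm_minus_commute)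
  have h5: "2 * inner (- (a - b)) (C b - C xs) \<le> (norm (a - b))\<^sup>2 / (2 * bt) + 2 * bt * (norm (C b - C xs))\<^sup>2"
    using young[OF bt, of "- (a - b)" "C b - C xs"] by (simp add: norm_minus_commute)
  have h4': "g * (2 * inner (- (a - b)) (B b - B c0)) \<le> g * (L * ((norm (a - b))\<^sup>2 + (norm (b - c0))\<^sup>2))"
    using h4 g by (simp add: mult_left_mono)
  have h5': "g * (2 * inner (- (a - b)) (C b - C xs)) \<le> g * ((norm (a - b))\<^sup>2 / (2 * bt) + 2 * bt * (norm (C b - C xs))\<^sup>2)"
    using h5 g by (simp add: mult_left_mono)
  have h6: "g * (bt * (norm (C b - C xs))\<^sup>2) \<le> g * inner (b - xs) (C b - C xs)"
    using coc g by (simp add: mult_left_mono)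
  have h7: "0 \<le> g * inner (a - xs) (B a - B xs)" using mono g by simp
  show ?thesis using h1 h2 h3 h4' h5' h6 h7
    by (simp add: algebra_simps add_divide_distrib)
qed

lemma V1:
  fixes a :: "nat \<Rightarrow> 'a::real_inner"
  assumes "finite I" "(\<Sum>i\<in>I. w i) = 1"
  shows "(\<Sum>i\<in>I. w i * (norm (a i - (\<Sum>j\<in>I. w j *\<^sub>R a j)))\<^sup>2)
       = (\<Sum>i\<in>I. w i * (norm (a i))\<^sup>2) - (norm (\<Sum>j\<in>I. w j *\<^sub>R a j))\<^sup>2"
proof -
  define P where "P = (\<Sum>j\<in>I. w j *\<^sub>R a j)"
  have t: "w i * (norm (a i - P))\<^sup>2 = w i * (norm (a i))\<^sup>2 - 2 * inner (w i *\<^sub>R a i) P + w i * (norm P)\<^sup>2" for i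
    by (simp add: power2_norm_eq_inner inner_diff inner_commute algebra_simps)
  have "(\<Sum>i\<in>I. w i * (norm (a i - P))\<^sup>2) = (\<Sum>i\<in>I. w i * (norm (a i))\<^sup>2) - 2 * (\<Sum>i\<in>I. inner (w i *\<^sub>R a i) P) + (\<Sum>i\<in>I. w i) * (norm P)\<^sup>2"
    unfolding t by (simp add: sum.distrib sum_subtractf sum_distrib_left sum_distrib_right)
  also have "(\<Sum>i\<in>I. inner (w i *\<^sub>R a i) P) = inner P P" unfolding P_def by (simp add: inner_sum_left)
  finally show ?thesis using assms(2) unfolding P_def by (simp add: power2_norm_eq_inner)
qed

lemma V2:
  fixes a :: "nat \<Rightarrow> 'a::real_inner"
  assumes "finite I" "(\<Sum>i\<in>I. w i) = 1"
  shows "(\<Sum>i\<in>I. w i * inner b (a i - (\<Sum>j\<in>I. w j *\<^sub>R a j))) = 0"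
proof -
  define P where "P = (\<Sum>j\<in>I. w j *\<^sub>R a j)"
  have "(\<Sum>i\<in>I. w i * inner b (a i - P)) = (\<Sum>i\<in>I. inner b (w i *\<^sub>R a i)) - (\<Sum>i\<in>I. w i) * inner b P"
    by (simp add: inner_diff_right algebra_simps sum_subtractf sum_distrib_right)
  also have "(\<Sum>i\<in>I. inner b (w i *\<^sub>R a i)) = inner b P" unfolding P_def by (simp add: inner_sum_right)
  finally show ?thesis using assms(2) unfolding P_def by simp
qed

lemma V1_le:
  fixes a :: "nat \<Rightarrow> 'a::real_inner"
  assumes "finite I" "(\<Sum>i\<in>I. w i) = 1" "\<And>i. i \<in> I \<Longrightarrow> w i \<ge> 0"
  shows "(norm (\<Sum>j\<in>I. w j *\<^sub>R a j))\<^sup>2 \<le> (\<Sum>i\<in>I. w i * (norm (a i))\<^sup>2)"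
    and "(\<Sum>i\<in>I. w i * (norm (a i - (\<Sum>j\<in>I. w j *\<^sub>R a j)))\<^sup>2) \<le> (\<Sum>i\<in>I. w i * (norm (a i))\<^sup>2)"
proof -
  have "0 \<le> (\<Sum>i\<in>I. w i * (norm (a i - (\<Sum>j\<in>I. w j *\<^sub>R a j)))\<^sup>2)"
    using assms(3) by (intro sum_nonneg) simp
  thus "(norm (\<Sum>j\<in>I. w j *\<^sub>R a j))\<^sup>2 \<le> (\<Sum>i\<in>I. w i * (norm (a i))\<^sup>2)"
    using V1[OF assms(1,2), of a] by simp
  show "(\<Sum>i\<in>I. w i * (norm (a i - (\<Sum>j\<in>I. w j *\<^sub>R a j)))\<^sup>2) \<le> (\<Sum>i\<in>I. w i * (norm (a i))\<^sup>2)"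
    using V1[OF assms(1,2), of a] by simp
qed

lemma I4_alg:
  fixes a b :: "nat \<Rightarrow> 'a::real_inner"
  assumes fin: "finite I" and ws: "(\<Sum>i\<in>I. w i) = 1" and wp: "\<And>i. i \<in> I \<Longrightarrow> w i \<ge> 0"
  shows "(\<Sum>i\<in>I. w i * (norm ((\<Sum>j\<in>I. w j *\<^sub>R a j) + (b i - (\<Sum>j\<in>I. w j *\<^sub>R b j))))\<^sup>2)
     \<le> (\<Sum>i\<in>I. w i * (norm (a i))\<^sup>2) + (\<Sum>i\<in>I. w i * (norm (b i))\<^sup>2)"
proof -
  define Pa where "Pa = (\<Sum>j\<in>I. w j *\<^sub>R a j)"
  define Pb where "Pb = (\<Sum>j\<in>I. w j *\<^sub>R b j)"
  have t: "w i * (norm (Pa + (b i - Pb)))\<^sup>2 = w i * (norm Pa)\<^sup>2 + 2 * (w i * inner Pa (b i - Pb)) + w i * (norm (b i - Pb))\<^sup>2" for i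
    by (simp add: power2_norm_eq_inner inner_add inner_commute algebra_simps)
  have "(\<Sum>i\<in>I. w i * (norm (Pa + (b i - Pb)))\<^sup>2) = (\<Sum>i\<in>I. w i) * (norm Pa)\<^sup>2 + 2 * (\<Sum>i\<in>I. w i * inner Pa (b i - Pb)) + (\<Sum>i\<in>I. w i * (norm (b i - Pb))\<^sup>2)"
    unfolding t by (simp add: sum.distrib sum_distrib_left sum_distrib_right)
  also have "(\<Sum>i\<in>I. w i * inner Pa (b i - Pb)) = 0" unfolding Pb_def by (rule V2[OF fin ws])
  finally have "(\<Sum>i\<in>I. w i * (norm (Pa + (b i - Pb)))\<^sup>2) = (norm Pa)\<^sup>2 + (\<Sum>i\<in>I. w i * (norm (b i - Pb))\<^sup>2)"
    using ws by simp
  moreover have "(norm Pa)\<^sup>2 \<le> (\<Sum>i\<in>I. w i * (norm (a i))\<^sup>2)" unfolding Pa_def by (rule V1_le(1)[OF fin ws wp])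
  moreover have "(\<Sum>i\<in>I. w i * (norm (b i - Pb))\<^sup>2) \<le> (\<Sum>i\<in>I. w i * (norm (b i))\<^sup>2)"
    unfolding Pb_def by (rule V1_le(2)[OF fin ws wp])
  ultimately show ?thesis unfolding Pa_def Pb_def by linarith
qed

lemma norm_diff_sq_le: "(norm (u - v))\<^sup>2 \<le> 2 * (norm u)\<^sup>2 + 2 * (norm v)\<^sup>2" for u v :: "'a::real_inner"
proof -
  have "(norm (u - v))\<^sup>2 + (norm (u + v))\<^sup>2 = 2 * (norm u)\<^sup>2 + 2 * (norm v)\<^sup>2"
    using parallelogram[of u "- v"] by simp
  moreover have "0 \<le> (norm (u + v))\<^sup>2" by simp
  ultimately show ?thesis by linarith
qed

lemma I3_alg:
  fixes u b :: "nat \<Rightarrow> 'a::real_inner"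
  assumes fin: "finite I" and ws: "(\<Sum>i\<in>I. w i) = 1" and wp: "\<And>i. i \<in> I \<Longrightarrow> w i \<ge> 0"
  shows "(\<Sum>i\<in>I. w i * (norm (u i - (b i - (\<Sum>j\<in>I. w j *\<^sub>R b j))))\<^sup>2)
     \<le> 2 * (\<Sum>i\<in>I. w i * (norm (u i))\<^sup>2) + 2 * (\<Sum>i\<in>I. w i * (norm (b i))\<^sup>2)"
proof -
  define Pb where "Pb = (\<Sum>j\<in>I. w j *\<^sub>R b j)"
  have "(\<Sum>i\<in>I. w i * (norm (u i - (b i - Pb)))\<^sup>2) \<le> (\<Sum>i\<in>I. w i * (2 * (norm (u i))\<^sup>2 + 2 * (norm (b i - Pb))\<^sup>2))"
    using wp norm_diff_sq_le by (intro sum_mono mult_left_mono) auto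
  also have "\<dots> = 2 * (\<Sum>i\<in>I. w i * (norm (u i))\<^sup>2) + 2 * (\<Sum>i\<in>I. w i * (norm (b i - Pb))\<^sup>2)"
    by (simp add: sum.distrib sum_distrib_left algebra_simps)
  also have "(\<Sum>i\<in>I. w i * (norm (b i - Pb))\<^sup>2) \<le> (\<Sum>i\<in>I. w i * (norm (b i))\<^sup>2)"
    unfolding Pb_def by (rule V1_le(2)[OF fin ws wp])
  finally show ?thesis unfolding Pb_def by linarith
qed

locale alg =
  fixes A :: "nat \<Rightarrow> 'a::{real_inner, complete_space} \<Rightarrow> 'a set"
    and B C :: "'a \<Rightarrow> 'a"
    and m :: nat and L \<beta> \<gamma> :: real and \<omega> :: "nat \<Rightarrow> real"
    and x :: "nat \<Rightarrow> 'a" and z :: "nat \<Rightarrow> nat \<Rightarrow> 'a" and y :: "int \<Rightarrow> nat \<Rightarrow> 'a"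
  assumes m: "m \<ge> 1"
    and A: "\<And>i. i < m \<Longrightarrow> maximal_monotone (A i)"
    and L: "L > 0" and Bmono: "monotone_fun B" and Blip: "L-lipschitz_on UNIV B"
    and \<beta>: "\<beta> > 0" and Ccoc: "cocoercive \<beta> C"
    and \<omega>: "\<And>i. i < m \<Longrightarrow> 0 < \<omega> i \<and> \<omega> i \<le> 1"
    and \<omega>sum: "(\<Sum>i<m. \<omega> i) = 1"
    and \<gamma>: "0 < \<gamma>" "\<gamma> < \<beta> / (2 * (1 + 4 * \<beta> * L))"
    and xrec: "\<And>n. x (Suc n) = (\<Sum>j<m. \<omega> j *\<^sub>R z n j)"
    and yrec: "\<And>n i. i < m \<Longrightarrow> y (int n + 1) i =
        resolvent (scale_op (\<gamma> / \<omega> i) (A i))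
          (2 *\<^sub>R x (Suc n) - z n i - (2 * \<gamma>) *\<^sub>R B (y (int n) i)
           + \<gamma> *\<^sub>R B (y (int n - 1) i) - \<gamma> *\<^sub>R C (y (int n) i))"
    and zrec: "\<And>n i. i < m \<Longrightarrow> z (Suc n) i = z n i + y (int n + 1) i - x (Suc n)"
begin

lemma scaleR_2mul: "(2 * g) *\<^sub>R v = g *\<^sub>R v + g *\<^sub>R v" for v :: "'b::real_vector"
  by (metis mult_2 scaleR_add_left)

lemma scaleR_mul2: "(g * 2) *\<^sub>R v = g *\<^sub>R v + g *\<^sub>R v" for v :: "'b::real_vector"
  by (metis mult_2_right scaleR_add_left)

definition Y where "Y n i = y (int n) i"
definition X where "X n = x (Suc n)"
definition cc where "cc i = \<gamma> / \<omega> i"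
definition F where "F n i = 2 *\<^sub>R B (Y (Suc n) i) - B (Y n i) + C (Y (Suc n) i)"
definition al where "al n i = (1 / cc i) *\<^sub>R (2 *\<^sub>R X (Suc n) - z (Suc n) i - \<gamma> *\<^sub>R F n i - Y (Suc (Suc n)) i)"

lemma \<omega>pos: "i < m \<Longrightarrow> \<omega> i > 0" using \<omega> by blast
lemma \<omega>le1: "i < m \<Longrightarrow> \<omega> i \<le> 1" using \<omega> by blast
lemma \<omega>nn: "i \<in> {..<m} \<Longrightarrow> \<omega> i \<ge> 0" using \<omega> by (simp add: less_imp_le)
lemma ccpos: "i < m \<Longrightarrow> cc i > 0" unfolding cc_def using \<omega>pos \<gamma> by simp
lemma \<omega>cc: "i < m \<Longrightarrow> \<omega> i * cc i = \<gamma>" unfolding cc_def using \<omega>pos[of i] by simp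

lemma X_eq: "X n = (\<Sum>j<m. \<omega> j *\<^sub>R z n j)" unfolding X_def by (rule xrec)

lemma zstep: "i < m \<Longrightarrow> z (Suc n) i = z n i + Y (Suc n) i - X n"
  unfolding Y_def X_def using zrec[of i n] by (simp add: add.commute)

lemma Ystep: "i < m \<Longrightarrow> Y (Suc n) i = X n + (z (Suc n) i - z n i)"
  using zstep[of i n] by (simp add: algebra_simps)

lemma al_mem: assumes i: "i < m" shows "al n i \<in> A i (Y (Suc (Suc n)) i)"
proof -
  have arg: "2 *\<^sub>R x (Suc (Suc n)) - z (Suc n) i - (2 * \<gamma>) *\<^sub>R B (y (int (Suc n)) i)
           + \<gamma> *\<^sub>R B (y (int (Suc n) - 1) i) - \<gamma> *\<^sub>R C (y (int (Suc n)) i)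
        = 2 *\<^sub>R X (Suc n) - z (Suc n) i - \<gamma> *\<^sub>R F n i"
    unfolding X_def F_def Y_def by (simp add: algebra_simps scaleR_2 scaleR_2mul scaleR_mul2)
  have "Y (Suc (Suc n)) i = resolvent (scale_op (cc i) (A i)) (2 *\<^sub>R X (Suc n) - z (Suc n) i - \<gamma> *\<^sub>R F n i)"
    using yrec[OF i, of "Suc n"] unfolding arg[symmetric] cc_def Y_def by (simp add: add.commute)
  from resolvent_scale[OF A[OF i] ccpos[OF i] this]
  obtain a where a: "a \<in> A i (Y (Suc (Suc n)) i)"
    "2 *\<^sub>R X (Suc n) - z (Suc n) i - \<gamma> *\<^sub>R F n i = Y (Suc (Suc n)) i + cc i *\<^sub>R a" by blast
  have "al n i = a" unfolding al_def a(2) using ccpos[OF i] by simp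
  thus ?thesis using a(1) by simp
qed

lemma KI: assumes i: "i < m"
  shows "cc i *\<^sub>R al n i = X (Suc n) - z (Suc (Suc n)) i - \<gamma> *\<^sub>R F n i"
proof -
  have "cc i *\<^sub>R al n i = 2 *\<^sub>R X (Suc n) - z (Suc n) i - \<gamma> *\<^sub>R F n i - Y (Suc (Suc n)) i"
    unfolding al_def using ccpos[OF i] by simp
  also have "\<dots> = X (Suc n) - z (Suc (Suc n)) i - \<gamma> *\<^sub>R F n i"
    using zstep[OF i, of "Suc n"] by (simp add: algebra_simps scaleR_2)
  finally show ?thesis .
qed

definition sol where "sol xs as \<longleftrightarrow> (\<forall>i<m. as i \<in> A i xs) \<and> (\<Sum>i<m. as i) + B xs + C xs = 0"
definition zsol where "zsol xs as i = xs - cc i *\<^sub>R as i - \<gamma> *\<^sub>R (B xs + C xs)"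

lemma zsol_avg: assumes "sol xs as" shows "(\<Sum>i<m. \<omega> i *\<^sub>R zsol xs as i) = xs"
proof -
  have "(\<Sum>i<m. \<omega> i *\<^sub>R zsol xs as i) = (\<Sum>i<m. \<omega> i *\<^sub>R xs - \<gamma> *\<^sub>R as i - \<omega> i *\<^sub>R (\<gamma> *\<^sub>R (B xs + C xs)))"
    by (rule sum.cong) (auto simp: zsol_def scaleR_diff_right \<omega>cc)
  also have "\<dots> = (\<Sum>i<m. \<omega> i) *\<^sub>R xs - \<gamma> *\<^sub>R (\<Sum>i<m. as i) - ((\<Sum>i<m. \<omega> i) * \<gamma>) *\<^sub>R (B xs + C xs)"
    by (simp add: sum_subtractf scaleR_sum_left scaleR_sum_right sum_distrib_right)
  also have "\<dots> = xs - \<gamma> *\<^sub>R ((\<Sum>i<m. as i) + (B xs + C xs))"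
    using \<omega>sum by (simp add: scaleR_add_right)
  also have "(\<Sum>i<m. as i) + (B xs + C xs) = 0" using assms unfolding sol_def by (simp add: add.assoc)
  finally show ?thesis using \<omega>sum by simp
qed

end

context alg begin

lemma Blip': "norm (B u - B v) \<le> L * norm (u - v)"
  using lipschitz_onD[OF Blip, of u v] by (simp add: dist_norm)

lemma Bmono': "0 \<le> inner (u - v) (B u - B v)"
  using Bmono unfolding monotone_fun_def by blast

lemma Ccoc': "\<beta> * (norm (C u - C v))\<^sup>2 \<le> inner (u - v) (C u - C v)"
  using Ccoc unfolding cocoercive_def by blast

lemma Clip: "norm (C u - C v) \<le> (1 / \<beta>) * norm (u - v)"
proof -
  have "\<beta> * (norm (C u - C v))\<^sup>2 \<le> norm (u - v) * norm (C u - C v)"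
    using Ccoc'[of u v] norm_cauchy_schwarz[of "u - v" "C u - C v"] by linarith
  hence "\<beta> * norm (C u - C v) \<le> norm (u - v)"
    by (cases "norm (C u - C v) = 0") (auto simp: power2_eq_square mult.assoc mult_le_cancel_right_pos)
  thus ?thesis using \<beta> by (simp add: field_simps)
qed

definition E where "E zs n = (\<Sum>i<m. \<omega> i * (norm (z n i - zs i))\<^sup>2)"
definition R where "R n = (\<Sum>i<m. \<omega> i * (norm (z (Suc n) i - z n i))\<^sup>2)"
definition S where "S n = (\<Sum>i<m. \<omega> i * (norm (Y (Suc n) i - Y n i))\<^sup>2)"
definition Phi where "Phi xs n = (\<Sum>i<m. \<omega> i * (2 * \<gamma> * inner (Y (Suc n) i - xs) (B (Y (Suc n) i) - B (Y n i))))"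

lemma step_i:
  fixes n :: nat
  assumes i: "i < m" and sol: "sol xs as"
  defines "zs \<equiv> zsol xs as" and "p \<equiv> X (Suc n) - xs"
  shows "(norm (z (Suc (Suc n)) i - zs i))\<^sup>2 \<le> (norm (z (Suc n) i - zs i))\<^sup>2 - (norm (z (Suc (Suc n)) i - z (Suc n) i))\<^sup>2
     + 2 * inner p (p - (z (Suc n) i - zs i))
     + (2 * \<gamma> * inner (Y (Suc (Suc n)) i - xs) (B (Y (Suc (Suc n)) i) - B (Y (Suc n) i))
        - 2 * \<gamma> * inner (Y (Suc n) i - xs) (B (Y (Suc n) i) - B (Y n i))
        + (\<gamma> * L + \<gamma> / (2 * \<beta>)) * (norm (Y (Suc (Suc n)) i - Y (Suc n) i))\<^sup>2
        + \<gamma> * L * (norm (Y (Suc n) i - Y n i))\<^sup>2)"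
proof -
  define e where "e = z (Suc n) i - zs i"
  define r where "r = z (Suc (Suc n)) i - z (Suc n) i"
  define G where "G = F n i - (B xs + C xs)"
  have pr: "p + r = Y (Suc (Suc n)) i - xs"
    unfolding p_def r_def using Ystep[OF i, of "Suc n"] by (simp add: algebra_simps)
  have er: "e + r = z (Suc (Suc n)) i - zs i" unfolding e_def r_def by simp
  have cas: "cc i *\<^sub>R as i = xs - zs i - \<gamma> *\<^sub>R (B xs + C xs)"
    unfolding zs_def zsol_def by (simp add: algebra_simps)
  have vec: "p - (e + r) - \<gamma> *\<^sub>R G = cc i *\<^sub>R (al n i - as i)"
    unfolding scaleR_diff_right KI[OF i] cas er p_def G_def by (simp add: algebra_simps)
  have "as i \<in> A i xs" using sol i unfolding sol_def by blast
  hence "0 \<le> inner (Y (Suc (Suc n)) i - xs) (al n i - as i)"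
    using mm_mono[OF A[OF i] al_mem[OF i]] by blast
  hence "0 \<le> inner (p + r) (p - (e + r) - \<gamma> *\<^sub>R G)"
    unfolding vec pr using ccpos[OF i] by simp
  from I1_alg[OF this]
  have h1: "(norm (z (Suc (Suc n)) i - zs i))\<^sup>2 \<le> (norm e)\<^sup>2 - (norm r)\<^sup>2 + 2 * inner p (p - e)
      - 2 * \<gamma> * inner (Y (Suc (Suc n)) i - xs) G"
    unfolding er pr .
  have GF: "G = 2 *\<^sub>R B (Y (Suc n) i) - B (Y n i) + C (Y (Suc n) i) - (B xs + C xs)"
    unfolding G_def F_def ..
  have h2: "- 2 * \<gamma> * inner (Y (Suc (Suc n)) i - xs) G
     \<le> 2 * \<gamma> * inner (Y (Suc (Suc n)) i - xs) (B (Y (Suc (Suc n)) i) - B (Y (Suc n) i))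
        - 2 * \<gamma> * inner (Y (Suc n) i - xs) (B (Y (Suc n) i) - B (Y n i))
        + (\<gamma> * L + \<gamma> / (2 * \<beta>)) * (norm (Y (Suc (Suc n)) i - Y (Suc n) i))\<^sup>2
        + \<gamma> * L * (norm (Y (Suc n) i - Y n i))\<^sup>2"
    unfolding GF by (rule BC_alg[OF Bmono' Blip' Ccoc' \<gamma>(1) \<beta>]) (use L in simp)
  show ?thesis using h1 h2 unfolding e_def r_def by linarith
qed

end

context alg begin

lemma step_sum:
  assumes sol: "sol xs as"
  shows "E (zsol xs as) (Suc (Suc n)) \<le> E (zsol xs as) (Suc n) - R (Suc n) + Phi xs (Suc n) - Phi xs n
     + (\<gamma> * L + \<gamma> / (2 * \<beta>)) * S (Suc n) + \<gamma> * L * S n"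
proof -
  define zs where "zs = zsol xs as"
  define p where "p = X (Suc n) - xs"
  define T1 where "T1 i = (norm (z (Suc n) i - zs i))\<^sup>2" for i
  define T2 where "T2 i = (norm (z (Suc (Suc n)) i - z (Suc n) i))\<^sup>2" for i
  define T3 where "T3 i = inner p (p - (z (Suc n) i - zs i))" for i
  define T4 where "T4 i = 2 * \<gamma> * inner (Y (Suc (Suc n)) i - xs) (B (Y (Suc (Suc n)) i) - B (Y (Suc n) i))" for i
  define T5 where "T5 i = 2 * \<gamma> * inner (Y (Suc n) i - xs) (B (Y (Suc n) i) - B (Y n i))" for i
  define T6 where "T6 i = (norm (Y (Suc (Suc n)) i - Y (Suc n) i))\<^sup>2" for i
  define T7 where "T7 i = (norm (Y (Suc n) i - Y n i))\<^sup>2" for i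
  define k1 where "k1 = \<gamma> * L + \<gamma> / (2 * \<beta>)"
  have pi: "\<omega> i * (norm (z (Suc (Suc n)) i - zs i))\<^sup>2 \<le> \<omega> i * (T1 i - T2 i + 2 * T3 i + (T4 i - T5 i + k1 * T6 i + \<gamma> * L * T7 i))"
    if "i \<in> {..<m}" for i
  proof -
    have "i < m" using that by simp
    from step_i[OF this sol, of n] have "(norm (z (Suc (Suc n)) i - zs i))\<^sup>2 \<le> T1 i - T2 i + 2 * T3 i + (T4 i - T5 i + k1 * T6 i + \<gamma> * L * T7 i)"
      unfolding T1_def T2_def T3_def T4_def T5_def T6_def T7_def k1_def zs_def p_def .
    thus ?thesis using \<omega>nn[OF that] by (rule mult_left_mono)
  qed
  have "E zs (Suc (Suc n)) \<le> (\<Sum>i<m. \<omega> i * (T1 i - T2 i + 2 * T3 i + (T4 i - T5 i + k1 * T6 i + \<gamma> * L * T7 i)))"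
    unfolding E_def by (rule sum_mono) (rule pi)
  also have "\<dots> = (\<Sum>i<m. \<omega> i * T1 i) - (\<Sum>i<m. \<omega> i * T2 i) + 2 * (\<Sum>i<m. \<omega> i * T3 i)
      + (\<Sum>i<m. \<omega> i * T4 i) - (\<Sum>i<m. \<omega> i * T5 i) + k1 * (\<Sum>i<m. \<omega> i * T6 i) + \<gamma> * L * (\<Sum>i<m. \<omega> i * T7 i)"
    by (simp add: sum.distrib sum_subtractf sum_distrib_left algebra_simps)
  also have "(\<Sum>i<m. \<omega> i * T3 i) = 0"
  proof -
    have "(\<Sum>i<m. \<omega> i * T3 i) = inner p (\<Sum>i<m. \<omega> i *\<^sub>R (p - (z (Suc n) i - zs i)))"
      unfolding T3_def by (simp add: inner_sum_right)
    also have "(\<Sum>i<m. \<omega> i *\<^sub>R (p - (z (Suc n) i - zs i))) = (\<Sum>i<m. \<omega> i) *\<^sub>R p - (\<Sum>i<m. \<omega> i *\<^sub>R z (Suc n) i) + (\<Sum>i<m. \<omega> i *\<^sub>R zs i)"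
      by (simp add: scaleR_diff_right sum_subtractf sum.distrib scaleR_sum_left algebra_simps)
    also have "\<dots> = 0" unfolding \<omega>sum zs_def zsol_avg[OF sol] X_eq[symmetric] p_def by simp
    finally show ?thesis by simp
  qed
  finally show ?thesis
    unfolding E_def R_def S_def Phi_def T1_def T2_def T4_def T5_def T6_def T7_def k1_def zs_def by simp
qed

end

lemma amgm_lip_t:
  fixes u v w :: "'a::real_inner"
  assumes "norm v \<le> L * norm w" "L \<ge> 0" "t > 0"
  shows "2 * inner u v \<le> L * (t * (norm u)\<^sup>2 + (norm w)\<^sup>2 / t)"
proof -
  have "inner u v \<le> norm u * norm v" by (rule norm_cauchy_schwarz)
  also have "\<dots> \<le> norm u * (L * norm w)" using assms by (simp add: mult_left_mono)
  finally have "2 * inner u v \<le> L * (2 * norm u * norm w)" by (simp add: algebra_simps)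
  also have "\<dots> \<le> L * (t * (norm u)\<^sup>2 + (norm w)\<^sup>2 / t)"
  proof -
    have "0 \<le> (t * norm u - norm w)\<^sup>2 / t" using assms(3) by simp
    also have "\<dots> = t * (norm u)\<^sup>2 + (norm w)\<^sup>2 / t - 2 * norm u * norm w"
      using assms(3) by (simp add: power2_eq_square field_simps)
    finally have "2 * norm u * norm w \<le> t * (norm u)\<^sup>2 + (norm w)\<^sup>2 / t" by simp
    thus ?thesis using assms(2) by (simp add: mult_left_mono)
  qed
  finally show ?thesis .
qed

context alg begin

lemma Xdiff: "X (Suc n) - X n = (\<Sum>j<m. \<omega> j *\<^sub>R (z (Suc n) j - z n j))"
  unfolding X_eq by (simp add: scaleR_diff_right sum_subtractf)

lemma S_le: "S (Suc n) \<le> 2 * R (Suc n) + 2 * R n"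
proof -
  define u where "u i = z (Suc (Suc n)) i - z (Suc n) i" for i
  define b where "b i = z (Suc n) i - z n i" for i
  have "S (Suc n) = (\<Sum>i<m. \<omega> i * (norm (u i - (b i - (\<Sum>j<m. \<omega> j *\<^sub>R b j))))\<^sup>2)"
    unfolding S_def
  proof (rule sum.cong)
    fix i assume "i \<in> {..<m}"
    hence i: "i < m" by simp
    have "Y (Suc (Suc n)) i - Y (Suc n) i = u i - (b i - (X (Suc n) - X n))"
      unfolding u_def b_def using Ystep[OF i, of "Suc n"] Ystep[OF i, of n] by (simp add: algebra_simps)
    thus "\<omega> i * (norm (Y (Suc (Suc n)) i - Y (Suc n) i))\<^sup>2 = \<omega> i * (norm (u i - (b i - (\<Sum>j<m. \<omega> j *\<^sub>R b j))))\<^sup>2"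
      unfolding Xdiff b_def by simp
  qed simp
  also have "\<dots> \<le> 2 * (\<Sum>i<m. \<omega> i * (norm (u i))\<^sup>2) + 2 * (\<Sum>i<m. \<omega> i * (norm (b i))\<^sup>2)"
    by (rule I3_alg[OF finite_lessThan \<omega>sum \<omega>nn])
  finally show ?thesis unfolding R_def u_def b_def by simp
qed

lemma Y_sq_le:
  assumes sol: "sol xs as"
  shows "(\<Sum>i<m. \<omega> i * (norm (Y (Suc n) i - xs))\<^sup>2) \<le> E (zsol xs as) (Suc n) + R n"
proof -
  define zs where "zs = zsol xs as"
  define a where "a i = z (Suc n) i - zs i" for i
  define b where "b i = z (Suc n) i - z n i" for i
  have Xn: "X n - xs = (\<Sum>j<m. \<omega> j *\<^sub>R a j) - (\<Sum>j<m. \<omega> j *\<^sub>R b j)"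
  proof -
    have "(\<Sum>j<m. \<omega> j *\<^sub>R a j) - (\<Sum>j<m. \<omega> j *\<^sub>R b j) = (\<Sum>j<m. \<omega> j *\<^sub>R z n j) - (\<Sum>j<m. \<omega> j *\<^sub>R zs j)"
      unfolding a_def b_def by (simp add: scaleR_diff_right sum_subtractf)
    thus ?thesis unfolding X_eq zs_def zsol_avg[OF sol] by simp
  qed
  have "(\<Sum>i<m. \<omega> i * (norm (Y (Suc n) i - xs))\<^sup>2) = (\<Sum>i<m. \<omega> i * (norm ((\<Sum>j<m. \<omega> j *\<^sub>R a j) + (b i - (\<Sum>j<m. \<omega> j *\<^sub>R b j))))\<^sup>2)"
  proof (rule sum.cong)
    fix i assume "i \<in> {..<m}"
    hence i: "i < m" by simp
    have "Y (Suc n) i - xs = (X n - xs) + b i" unfolding b_def using Ystep[OF i, of n] by (simp add: algebra_simps)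
    thus "\<omega> i * (norm (Y (Suc n) i - xs))\<^sup>2 = \<omega> i * (norm ((\<Sum>j<m. \<omega> j *\<^sub>R a j) + (b i - (\<Sum>j<m. \<omega> j *\<^sub>R b j))))\<^sup>2"
    proof -
      have "Y (Suc n) i - xs = (\<Sum>j<m. \<omega> j *\<^sub>R a j) + (b i - (\<Sum>j<m. \<omega> j *\<^sub>R b j))"
        using \<open>Y (Suc n) i - xs = (X n - xs) + b i\<close> unfolding Xn by (simp add: algebra_simps)
      thus ?thesis by simp
    qed
  qed simp
  also have "\<dots> \<le> (\<Sum>i<m. \<omega> i * (norm (a i))\<^sup>2) + (\<Sum>i<m. \<omega> i * (norm (b i))\<^sup>2)"
    by (rule I4_alg[OF finite_lessThan \<omega>sum \<omega>nn])
  finally show ?thesis unfolding E_def R_def a_def b_def zs_def by simp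
qed

lemma Phi_abs_le:
  assumes t: "t > 0"
  shows "\<bar>Phi xs n\<bar> \<le> \<gamma> * L * (t * (\<Sum>i<m. \<omega> i * (norm (Y (Suc n) i - xs))\<^sup>2) + S n / t)"
proof -
  have pi: "\<omega> i * \<bar>2 * \<gamma> * inner (Y (Suc n) i - xs) (B (Y (Suc n) i) - B (Y n i))\<bar>
     \<le> \<omega> i * (\<gamma> * L * (t * (norm (Y (Suc n) i - xs))\<^sup>2 + (norm (Y (Suc n) i - Y n i))\<^sup>2 / t))"
    if "i \<in> {..<m}" for i
  proof -
    have l: "norm (B (Y (Suc n) i) - B (Y n i)) \<le> L * norm (Y (Suc n) i - Y n i)" by (rule Blip')
    have a1: "2 * inner (Y (Suc n) i - xs) (B (Y (Suc n) i) - B (Y n i)) \<le> L * (t * (norm (Y (Suc n) i - xs))\<^sup>2 + (norm (Y (Suc n) i - Y n i))\<^sup>2 / t)"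
      by (rule amgm_lip_t[OF l _ t]) (use L in simp)
    have a2: "2 * inner (- (Y (Suc n) i - xs)) (B (Y (Suc n) i) - B (Y n i)) \<le> L * (t * (norm (- (Y (Suc n) i - xs)))\<^sup>2 + (norm (Y (Suc n) i - Y n i))\<^sup>2 / t)"
      by (rule amgm_lip_t[OF l _ t]) (use L in simp)
    have "\<bar>2 * inner (Y (Suc n) i - xs) (B (Y (Suc n) i) - B (Y n i))\<bar> \<le> L * (t * (norm (Y (Suc n) i - xs))\<^sup>2 + (norm (Y (Suc n) i - Y n i))\<^sup>2 / t)"
    proof -
      have a2': "- (2 * inner (Y (Suc n) i - xs) (B (Y (Suc n) i) - B (Y n i))) \<le> L * (t * (norm (Y (Suc n) i - xs))\<^sup>2 + (norm (Y (Suc n) i - Y n i))\<^sup>2 / t)"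
        using a2 by (simp only: norm_minus_cancel inner_minus_left mult_minus_right)
      show ?thesis unfolding abs_le_iff using a1 a2' by simp
    qed
    hence "\<gamma> * \<bar>2 * inner (Y (Suc n) i - xs) (B (Y (Suc n) i) - B (Y n i))\<bar> \<le> \<gamma> * (L * (t * (norm (Y (Suc n) i - xs))\<^sup>2 + (norm (Y (Suc n) i - Y n i))\<^sup>2 / t))"
      using \<gamma>(1) by (simp add: mult_left_mono)
    hence "\<bar>2 * \<gamma> * inner (Y (Suc n) i - xs) (B (Y (Suc n) i) - B (Y n i))\<bar> \<le> \<gamma> * L * (t * (norm (Y (Suc n) i - xs))\<^sup>2 + (norm (Y (Suc n) i - Y n i))\<^sup>2 / t)"
      using \<gamma>(1) by (simp add: abs_mult mult.assoc mult.left_commute)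
    thus ?thesis using \<omega>nn[OF that] by (rule mult_left_mono)
  qed
  have "\<bar>Phi xs n\<bar> \<le> (\<Sum>i<m. \<bar>\<omega> i * (2 * \<gamma> * inner (Y (Suc n) i - xs) (B (Y (Suc n) i) - B (Y n i)))\<bar>)"
    unfolding Phi_def by (rule sum_abs)
  also have "\<dots> = (\<Sum>i<m. \<omega> i * \<bar>2 * \<gamma> * inner (Y (Suc n) i - xs) (B (Y (Suc n) i) - B (Y n i))\<bar>)"
    by (rule sum.cong) (use \<omega>nn in \<open>auto simp: abs_mult\<close>)
  also have "\<dots> \<le> (\<Sum>i<m. \<omega> i * (\<gamma> * L * (t * (norm (Y (Suc n) i - xs))\<^sup>2 + (norm (Y (Suc n) i - Y n i))\<^sup>2 / t)))"
    by (rule sum_mono) (rule pi)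
  also have "\<dots> = \<gamma> * L * (t * (\<Sum>i<m. \<omega> i * (norm (Y (Suc n) i - xs))\<^sup>2) + S n / t)"
    unfolding S_def by (simp add: sum.distrib sum_distrib_left sum_divide_distrib algebra_simps)
  finally show ?thesis .
qed

definition \<kappa> where "\<kappa> = 2 * \<gamma> * L + \<gamma> / (2 * \<beta>)"
definition Psi where "Psi xs as n = E (zsol xs as) (Suc n) - Phi xs n + \<gamma> * L * S n + 2 * \<kappa> * R n"

lemma gconsts: "4 * \<kappa> < 1" "\<gamma> * L < 1" "\<kappa> \<ge> 0"
proof -
  have bl: "0 < \<beta> * L" using \<beta> L by simp
  have "2 * (1 + 4 * \<beta> * L) = 2 + 8 * (\<beta> * L)" by (simp add: algebra_simps)
  hence pos: "2 * (1 + 4 * \<beta> * L) > 0" using bl by linarith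
  have "\<gamma> * (2 * (1 + 4 * \<beta> * L)) < \<beta> / (2 * (1 + 4 * \<beta> * L)) * (2 * (1 + 4 * \<beta> * L))"
    by (rule mult_strict_right_mono[OF \<gamma>(2) pos])
  also have "\<dots> = \<beta>" using pos by simp
  finally have "\<gamma> * (2 * (1 + 4 * \<beta> * L)) < \<beta>" .
  hence h: "2 * \<gamma> + 8 * \<gamma> * \<beta> * L < \<beta>" by (simp add: algebra_simps)
  have "4 * \<kappa> * \<beta> = 2 * \<gamma> + 8 * \<gamma> * \<beta> * L" unfolding \<kappa>_def using \<beta> by (simp add: field_simps)
  hence "4 * \<kappa> * \<beta> < 1 * \<beta>" using h by simp
  thus "4 * \<kappa> < 1" using \<beta> by (simp only: mult_less_cancel_right_pos)
  have "8 * \<gamma> * \<beta> * L < \<beta>" using h \<gamma> by simp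
  hence "(8 * \<gamma> * L) * \<beta> < 1 * \<beta>" by (simp add: algebra_simps)
  hence "8 * \<gamma> * L < 1" using \<beta> by (simp only: mult_less_cancel_right_pos)
  moreover have "\<gamma> * L > 0" using \<gamma> L by simp
  ultimately show "\<gamma> * L < 1" by simp
  show "\<kappa> \<ge> 0" unfolding \<kappa>_def using \<gamma> L \<beta> by simp
qed

lemma R_nn: "R n \<ge> 0" unfolding R_def using \<omega>nn by (intro sum_nonneg) simp
lemma S_nn: "S n \<ge> 0" unfolding S_def using \<omega>nn by (intro sum_nonneg) simp
lemma E_nn: "E zs n \<ge> 0" unfolding E_def using \<omega>nn by (intro sum_nonneg) simp

lemma psi_step:
  assumes sol: "sol xs as"
  shows "Psi xs as (Suc n) \<le> Psi xs as n - (1 - 4 * \<kappa>) * R (Suc n)"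
proof -
  have h1: "E (zsol xs as) (Suc (Suc n)) \<le> E (zsol xs as) (Suc n) - R (Suc n) + Phi xs (Suc n) - Phi xs n
     + (\<gamma> * L + \<gamma> / (2 * \<beta>)) * S (Suc n) + \<gamma> * L * S n" by (rule step_sum[OF sol])
  have "\<kappa> * S (Suc n) \<le> \<kappa> * (2 * R (Suc n) + 2 * R n)" using S_le gconsts(3) by (rule mult_left_mono)
  moreover have "\<kappa> = (\<gamma> * L + \<gamma> / (2 * \<beta>)) + \<gamma> * L" unfolding \<kappa>_def by simp
  ultimately show ?thesis using h1 unfolding Psi_def by (simp add: algebra_simps)
qed

lemma psi_lower:
  assumes sol: "sol xs as"
  shows "Psi xs as n \<ge> (1 - \<gamma> * L) * E (zsol xs as) (Suc n)"
proof -
  have "\<bar>Phi xs n\<bar> \<le> \<gamma> * L * (1 * (\<Sum>i<m. \<omega> i * (norm (Y (Suc n) i - xs))\<^sup>2) + S n / 1)"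
    by (rule Phi_abs_le) simp
  hence "Phi xs n \<le> \<gamma> * L * (\<Sum>i<m. \<omega> i * (norm (Y (Suc n) i - xs))\<^sup>2) + \<gamma> * L * S n"
    by (simp add: algebra_simps)
  moreover have "\<gamma> * L * (\<Sum>i<m. \<omega> i * (norm (Y (Suc n) i - xs))\<^sup>2) \<le> \<gamma> * L * (E (zsol xs as) (Suc n) + R n)"
    using Y_sq_le[OF sol] \<gamma> L by (simp add: mult_left_mono)
  moreover have "\<gamma> * L * R n \<le> 2 * \<kappa> * R n"
  proof -
    have "\<gamma> * L \<le> 2 * \<kappa>" unfolding \<kappa>_def using \<gamma> L \<beta> by simp
    thus ?thesis using R_nn by (simp add: mult_right_mono)
  qed
  ultimately show ?thesis unfolding Psi_def by (simp add: algebra_simps)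
qed

end

context alg begin

context
  fixes xs as
  assumes sol: "sol xs as"
begin

lemma psi_le0: "Psi xs as n \<le> Psi xs as 0"
proof (induction n)
  case (Suc n)
  have "(1 - 4 * \<kappa>) * R (Suc n) \<ge> 0" using gconsts(1) R_nn by simp
  thus ?case using psi_step[OF sol, of n] Suc by linarith
qed simp

lemma psi_nn: "Psi xs as n \<ge> 0"
proof -
  have "(1 - \<gamma> * L) * E (zsol xs as) (Suc n) \<ge> 0" using gconsts(2) E_nn by simp
  thus ?thesis using psi_lower[OF sol, of n] by linarith
qed

lemma E_bound: "E (zsol xs as) (Suc n) \<le> Psi xs as 0 / (1 - \<gamma> * L)"
proof -
  have "(1 - \<gamma> * L) * E (zsol xs as) (Suc n) \<le> Psi xs as 0" using psi_lower[OF sol, of n] psi_le0[of n] by linarith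
  thus ?thesis using gconsts(2) by (simp add: field_simps)
qed

lemma R_partial: "(1 - 4 * \<kappa>) * (\<Sum>k<K. R (Suc k)) \<le> Psi xs as 0 - Psi xs as K"
proof (induction K)
  case (Suc K)
  thus ?case using psi_step[OF sol, of K] by (simp add: algebra_simps)
qed simp

lemma R_lim: "R \<longlonglongrightarrow> 0"
proof -
  have e: "1 - 4 * \<kappa> > 0" using gconsts(1) by simp
  have "(\<Sum>k<K. R (Suc k)) \<le> Psi xs as 0 / (1 - 4 * \<kappa>)" for K
  proof -
    have "(1 - 4 * \<kappa>) * (\<Sum>k<K. R (Suc k)) \<le> Psi xs as 0" using R_partial[of K] psi_nn[of K] by linarith
    thus ?thesis using e by (simp add: field_simps)
  qed
  hence "summable (\<lambda>k. R (Suc k))" by (intro summableI_nonneg_bounded[OF R_nn]) 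
  hence "(\<lambda>k. R (Suc k)) \<longlonglongrightarrow> 0" by (rule summable_LIMSEQ_zero)
  thus ?thesis by (rule LIMSEQ_imp_Suc)
qed

lemma S_lim: "S \<longlonglongrightarrow> 0"
proof -
  have "(\<lambda>n. S (Suc n)) \<longlonglongrightarrow> 0"
  proof (rule tendsto_sandwich[of "\<lambda>n. 0" _ _ "\<lambda>n. 2 * R (Suc n) + 2 * R n"])
    show "\<forall>\<^sub>F n in sequentially. 0 \<le> S (Suc n)" using S_nn by simp
    show "\<forall>\<^sub>F n in sequentially. S (Suc n) \<le> 2 * R (Suc n) + 2 * R n" using S_le by simp
    show "(\<lambda>n. 0::real) \<longlonglongrightarrow> 0" by simp
    have "(\<lambda>n. R (Suc n)) \<longlonglongrightarrow> 0" using R_lim by (rule LIMSEQ_Suc)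
    thus "(\<lambda>n. 2 * R (Suc n) + 2 * R n) \<longlonglongrightarrow> 0" using R_lim by (auto intro!: tendsto_eq_intros)
  qed
  thus ?thesis by (rule LIMSEQ_imp_Suc)
qed

lemma Psi_conv: "convergent (Psi xs as)"
proof (rule Bseq_monoseq_convergent)
  show "Bseq (Psi xs as)"
    by (rule BseqI'[of _ "Psi xs as 0"]) (use psi_nn psi_le0 in simp)
  have "decseq (Psi xs as)"
  proof (rule decseq_SucI)
    fix n have "(1 - 4 * \<kappa>) * R (Suc n) \<ge> 0" using gconsts(1) R_nn by simp
    thus "Psi xs as (Suc n) \<le> Psi xs as n" using psi_step[OF sol, of n] by linarith
  qed
  thus "monoseq (Psi xs as)" unfolding monoseq_iff by simp
qed

lemma Phi_lim: "(\<lambda>n. Phi xs n) \<longlonglongrightarrow> 0"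
proof -
  obtain KR where KR: "\<And>n. \<bar>R n\<bar> \<le> KR" using convergent_imp_Bseq[of R] R_lim
    by (metis BseqE convergent_def real_norm_def)
  define D where "D = Psi xs as 0 / (1 - \<gamma> * L) + KR"
  have Dn: "(\<Sum>i<m. \<omega> i * (norm (Y (Suc n) i - xs))\<^sup>2) \<le> D" for n
    using Y_sq_le[OF sol, of n] E_bound[of n] KR[of n] unfolding D_def by linarith
  have D0: "D \<ge> 0" using Dn[of 0] \<omega>nn by (smt (verit) sum_nonneg mult_nonneg_nonneg zero_le_power2)
  define t where "t n = sqrt (S n + 1 / (real n + 1))" for n
  have tpos: "t n > 0" for n unfolding t_def using S_nn[of n] by (simp add: add_nonneg_pos)
  have bound: "\<bar>Phi xs n\<bar> \<le> \<gamma> * L * (D + 1) * t n" for n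
  proof -
    have "\<bar>Phi xs n\<bar> \<le> \<gamma> * L * (t n * (\<Sum>i<m. \<omega> i * (norm (Y (Suc n) i - xs))\<^sup>2) + S n / t n)"
      by (rule Phi_abs_le[OF tpos])
    also have "\<dots> \<le> \<gamma> * L * (t n * D + t n)"
    proof -
      have "t n * (\<Sum>i<m. \<omega> i * (norm (Y (Suc n) i - xs))\<^sup>2) \<le> t n * D"
        using Dn[of n] tpos[of n] by (simp add: mult_left_mono)
      moreover have "S n / t n \<le> t n"
      proof -
        have "S n \<le> (t n)\<^sup>2" unfolding t_def using S_nn[of n] by simp
        thus ?thesis using tpos[of n] by (simp add: divide_le_eq power2_eq_square)
      qed
      ultimately show ?thesis using \<gamma> L by (intro mult_left_mono) auto
    qed
    finally show ?thesis by (simp add: algebra_simps)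
  qed
  have "t \<longlonglongrightarrow> sqrt (0 + 0)"
  proof -
    have "(\<lambda>n. 1 / (real n + 1)) \<longlonglongrightarrow> 0"
      using LIMSEQ_inverse_real_of_nat by (simp add: inverse_eq_divide add.commute)
    hence "(\<lambda>n. S n + 1 / (real n + 1)) \<longlonglongrightarrow> 0 + 0" using S_lim by (intro tendsto_add)
    thus ?thesis unfolding t_def by (rule tendsto_real_sqrt)
  qed
  hence "(\<lambda>n. \<gamma> * L * (D + 1) * t n) \<longlonglongrightarrow> \<gamma> * L * (D + 1) * 0" by (intro tendsto_mult_left) simp
  hence "(\<lambda>n. \<gamma> * L * (D + 1) * t n) \<longlonglongrightarrow> 0" by simp
  hence lim2: "(\<lambda>n. \<gamma> * L * (D + 1) * t n) \<longlonglongrightarrow> 0" .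
  have "(\<lambda>n. \<bar>Phi xs n\<bar>) \<longlonglongrightarrow> 0"
  proof (rule tendsto_sandwich[of "\<lambda>n. 0" _ _ "\<lambda>n. \<gamma> * L * (D + 1) * t n"])
    show "\<forall>\<^sub>F n in sequentially. 0 \<le> \<bar>Phi xs n\<bar>" by simp
    show "\<forall>\<^sub>F n in sequentially. \<bar>Phi xs n\<bar> \<le> \<gamma> * L * (D + 1) * t n" using bound by simp
    show "(\<lambda>n. 0::real) \<longlonglongrightarrow> 0" by simp
    show "(\<lambda>n. \<gamma> * L * (D + 1) * t n) \<longlonglongrightarrow> 0" by (rule lim2)
  qed
  thus ?thesis by (simp add: tendsto_rabs_zero_iff)
qed

lemma E_conv: "convergent (\<lambda>n. E (zsol xs as) (Suc n))"
proof -
  have eq: "E (zsol xs as) (Suc n) = Psi xs as n + Phi xs n - \<gamma> * L * S n - 2 * \<kappa> * R n" for n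
    unfolding Psi_def by simp
  have "(\<lambda>n. Psi xs as n + Phi xs n - \<gamma> * L * S n - 2 * \<kappa> * R n) \<longlonglongrightarrow> lim (Psi xs as) + 0 - \<gamma> * L * 0 - 2 * \<kappa> * 0"
    using Psi_conv Phi_lim S_lim R_lim by (intro tendsto_intros) (simp_all add: convergent_LIMSEQ_iff)
  thus ?thesis unfolding eq convergent_def by blast
qed

end

lemma comp_lim:
  assumes i: "i < m" and Q: "Q \<longlonglongrightarrow> 0" and le: "\<And>n. \<omega> i * (norm (v n))\<^sup>2 \<le> Q n"
  shows "v \<longlonglongrightarrow> 0"
proof -
  have "(\<lambda>n. (norm (v n))\<^sup>2) \<longlonglongrightarrow> 0"
  proof (rule tendsto_sandwich[of "\<lambda>n. 0" _ _ "\<lambda>n. Q n / \<omega> i"])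
    show "\<forall>\<^sub>F n in sequentially. 0 \<le> (norm (v n))\<^sup>2" by simp
    show "\<forall>\<^sub>F n in sequentially. (norm (v n))\<^sup>2 \<le> Q n / \<omega> i"
      using le \<omega>pos[OF i] by (simp add: le_divide_eq mult.commute)
    show "(\<lambda>n. 0::real) \<longlonglongrightarrow> 0" by simp
    show "(\<lambda>n. Q n / \<omega> i) \<longlonglongrightarrow> 0" using tendsto_divide_zero[OF Q] by simp
  qed
  hence "(\<lambda>n. sqrt ((norm (v n))\<^sup>2)) \<longlonglongrightarrow> sqrt 0" by (rule tendsto_real_sqrt)
  hence "(\<lambda>n. norm (v n)) \<longlonglongrightarrow> 0" by simp
  thus ?thesis by (simp add: tendsto_norm_zero_iff)
qed

lemma single_le: "i < m \<Longrightarrow> \<omega> i * (norm (v i))\<^sup>2 \<le> (\<Sum>j<m. \<omega> j * (norm (v j))\<^sup>2)"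
  by (rule member_le_sum) (use \<omega>nn in auto)

end

lemma inner_bdd_zero:
  fixes a b :: "nat \<Rightarrow> 'a::real_inner"
  assumes "\<And>n. norm (a n) \<le> K" "b \<longlonglongrightarrow> 0"
  shows "(\<lambda>n. inner (a n) (b n)) \<longlonglongrightarrow> 0"
proof -
  have K: "K \<ge> 0" using assms(1)[of 0] norm_ge_zero order_trans by blast
  have nb: "(\<lambda>n. norm (b n)) \<longlonglongrightarrow> 0" using assms(2) by (simp add: tendsto_norm_zero_iff)
  have "(\<lambda>n. \<bar>inner (a n) (b n)\<bar>) \<longlonglongrightarrow> 0"
  proof (rule tendsto_sandwich[of "\<lambda>n. 0" _ _ "\<lambda>n. K * norm (b n)"])
    show "\<forall>\<^sub>F n in sequentially. 0 \<le> \<bar>inner (a n) (b n)\<bar>" by simp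
    have "\<bar>inner (a n) (b n)\<bar> \<le> K * norm (b n)" for n
      using Cauchy_Schwarz_ineq2[of "a n" "b n"] assms(1)[of n] by (meson mult_right_mono norm_ge_zero order_trans)
    thus "\<forall>\<^sub>F n in sequentially. \<bar>inner (a n) (b n)\<bar> \<le> K * norm (b n)" by simp
    show "(\<lambda>n. 0::real) \<longlonglongrightarrow> 0" by simp
    show "(\<lambda>n. K * norm (b n)) \<longlonglongrightarrow> 0" using tendsto_mult_left[OF nb, of K] by simp
  qed
  thus ?thesis by (simp add: tendsto_rabs_zero_iff)
qed

lemma lim_by_norm:
  fixes u v :: "nat \<Rightarrow> 'a::real_normed_vector"
  assumes "\<And>n. norm (u n) \<le> K * norm (v n)" "v \<longlonglongrightarrow> 0"
  shows "u \<longlonglongrightarrow> 0"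
proof -
  have nb: "(\<lambda>n. norm (v n)) \<longlonglongrightarrow> 0" using assms(2) by (simp add: tendsto_norm_zero_iff)
  have "(\<lambda>n. norm (u n)) \<longlonglongrightarrow> 0"
  proof (rule tendsto_sandwich[of "\<lambda>n. 0" _ _ "\<lambda>n. K * norm (v n)"])
    show "\<forall>\<^sub>F n in sequentially. 0 \<le> norm (u n)" by simp
    show "\<forall>\<^sub>F n in sequentially. norm (u n) \<le> K * norm (v n)" using assms(1) by simp
    show "(\<lambda>n. 0::real) \<longlonglongrightarrow> 0" by simp
    show "(\<lambda>n. K * norm (v n)) \<longlonglongrightarrow> 0" using tendsto_mult_left[OF nb, of K] by simp
  qed
  thus ?thesis by (simp add: tendsto_norm_zero_iff)
qed

lemma minty_term:
  fixes xb p d D W :: "'a::real_inner"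
  assumes e1: "xb - p = t *\<^sub>R d" and e2: "W = - d + om *\<^sub>R D"
    and nD: "norm D \<le> Lp * norm (xb - p)" and t: "t > 0" and om: "0 \<le> om" "om \<le> 1"
    and Lp: "Lp \<ge> 0" and tL: "t * Lp \<le> 1/2"
  shows "inner (xb - p) W \<le> - (t / 2) * (norm d)\<^sup>2"
proof -
  have "inner d D \<le> norm d * norm D" by (rule norm_cauchy_schwarz)
  also have "\<dots> \<le> norm d * (Lp * (t * norm d))"
    using nD e1 t by (simp add: mult_left_mono)
  also have "\<dots> = (t * Lp) * (norm d)\<^sup>2" by (simp add: power2_eq_square algebra_simps)
  also have "\<dots> \<le> (1/2) * (norm d)\<^sup>2" using tL by (rule mult_right_mono) simp
  finally have dD: "inner d D \<le> (1/2) * (norm d)\<^sup>2" .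
  have "om * inner d D \<le> (1/2) * (norm d)\<^sup>2"
  proof (cases "inner d D \<ge> 0")
    case True
    hence "om * inner d D \<le> 1 * inner d D" using om by (intro mult_right_mono) auto
    thus ?thesis using dD by simp
  next
    case False
    hence "om * inner d D \<le> 0" using om by (simp add: mult_nonneg_nonpos)
    moreover have "0 \<le> (1/2) * (norm d)\<^sup>2" by simp
    ultimately show ?thesis by linarith
  qed
  hence "t * (om * inner d D) \<le> t * ((1/2) * (norm d)\<^sup>2)" using t by (simp add: mult_left_mono)
  moreover have "inner (xb - p) W = - t * (norm d)\<^sup>2 + t * (om * inner d D)"
    unfolding e1 e2 by (simp add: inner_add_right power2_norm_eq_inner algebra_simps)
  ultimately show ?thesis by (simp add: algebra_simps)
qed

lemma weak_sum:
  assumes "\<And>j. j < m \<Longrightarrow> weakly_converges (\<lambda>k. s k j) (sb j)"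
  shows "weakly_converges (\<lambda>k. \<Sum>j<m. c j *\<^sub>R s k j) (\<Sum>j<m. c j *\<^sub>R sb j)"
  unfolding weakly_converges_def
proof
  fix w
  have "(\<lambda>k. \<Sum>j<m. c j * inner (s k j) w) \<longlonglongrightarrow> (\<Sum>j<m. c j * inner (sb j) w)"
    using assms unfolding weakly_converges_def by (intro tendsto_sum tendsto_mult_left) auto
  thus "(\<lambda>k. inner (\<Sum>j<m. c j *\<^sub>R s k j) w) \<longlonglongrightarrow> inner (\<Sum>j<m. c j *\<^sub>R sb j) w"
    by (simp add: inner_sum_left)
qed

context alg begin

context
  fixes xs as
  assumes sol: "sol xs as"
begin

lemma r_lim: assumes i: "i < m" shows "(\<lambda>n. z (Suc n) i - z n i) \<longlonglongrightarrow> 0"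
proof (rule comp_lim[OF i R_lim[OF sol]])
  fix n show "\<omega> i * (norm (z (Suc n) i - z n i))\<^sup>2 \<le> R n"
    unfolding R_def by (rule single_le[OF i, of "\<lambda>j. z (Suc n) j - z n j"])
qed

lemma dY_lim: assumes i: "i < m" shows "(\<lambda>n. Y (Suc n) i - Y n i) \<longlonglongrightarrow> 0"
proof (rule comp_lim[OF i S_lim[OF sol]])
  fix n show "\<omega> i * (norm (Y (Suc n) i - Y n i))\<^sup>2 \<le> S n"
    unfolding S_def by (rule single_le[OF i, of "\<lambda>j. Y (Suc n) j - Y n j"])
qed

lemma zbound: "\<exists>M. \<forall>n i. i < m \<longrightarrow> norm (z (Suc n) i) \<le> M"
proof -
  define zs where "zs = zsol xs as"
  define D1 where "D1 = Psi xs as 0 / (1 - \<gamma> * L)"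
  define M where "M = (\<Sum>j<m. norm (zs j) + sqrt (D1 / \<omega> j))"
  have "norm (z (Suc n) i) \<le> M" if i: "i < m" for n i
  proof -
    have "\<omega> i * (norm (z (Suc n) i - zs i))\<^sup>2 \<le> E zs (Suc n)"
      unfolding E_def by (rule single_le[OF i, of "\<lambda>j. z (Suc n) j - zs j"])
    also have "\<dots> \<le> D1" unfolding D1_def zs_def by (rule E_bound[OF sol])
    finally have "(norm (z (Suc n) i - zs i))\<^sup>2 \<le> D1 / \<omega> i" using \<omega>pos[OF i] by (simp add: le_divide_eq mult.commute)
    hence "norm (z (Suc n) i - zs i) \<le> sqrt (D1 / \<omega> i)" by (rule real_le_rsqrt)
    hence "norm (z (Suc n) i) \<le> norm (zs i) + sqrt (D1 / \<omega> i)"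
      using norm_triangle_sub[of "z (Suc n) i" "zs i"] by linarith
    also have "\<dots> \<le> M" unfolding M_def
    proof (rule member_le_sum[of i "{..<m}" "\<lambda>j. norm (zs j) + sqrt (D1 / \<omega> j)"])
      show "i \<in> {..<m}" using i by simp
      fix j assume "j \<in> {..<m} - {i}"
      have "D1 \<ge> 0" unfolding D1_def using psi_nn[OF sol, of 0] gconsts(2) by simp
      hence "D1 / \<omega> j \<ge> 0" using \<omega>nn[of j] \<open>j \<in> {..<m} - {i}\<close> by simp
      thus "0 \<le> norm (zs j) + sqrt (D1 / \<omega> j)" by simp
    qed simp
    finally show ?thesis .
  qed
  thus ?thesis by blast
qed

lemma Xbound: assumes "\<forall>n i. i < m \<longrightarrow> norm (z (Suc n) i) \<le> M" shows "norm (X (Suc n)) \<le> M"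
proof -
  have "norm (X (Suc n)) \<le> (\<Sum>j<m. norm (\<omega> j *\<^sub>R z (Suc n) j))" unfolding X_eq by (rule norm_sum)
  also have "\<dots> \<le> (\<Sum>j<m. \<omega> j * M)"
  proof (rule sum_mono)
    fix j assume "j \<in> {..<m}"
    thus "norm (\<omega> j *\<^sub>R z (Suc n) j) \<le> \<omega> j * M" using assms \<omega>nn[of j]
      by (simp add: mult_left_mono)
  qed
  also have "\<dots> = M" using \<omega>sum by (simp add: sum_distrib_right[symmetric])
  finally show ?thesis .
qed

lemma D_lim: "i < m \<Longrightarrow> (\<lambda>n. F n i - B (Y (Suc (Suc n)) i) - C (Y (Suc (Suc n)) i)) \<longlonglongrightarrow> 0"
proof -
  assume i: "i < m"
  have d0: "(\<lambda>n. Y (Suc n) i - Y n i) \<longlonglongrightarrow> 0" by (rule dY_lim[OF i])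
  have d1: "(\<lambda>n. Y (Suc (Suc n)) i - Y (Suc n) i) \<longlonglongrightarrow> 0" using LIMSEQ_Suc[OF d0] by simp
  have l1: "(\<lambda>n. B (Y (Suc n) i) - B (Y n i)) \<longlonglongrightarrow> 0" by (rule lim_by_norm[OF Blip' d0])
  have l2: "(\<lambda>n. B (Y (Suc (Suc n)) i) - B (Y (Suc n) i)) \<longlonglongrightarrow> 0" by (rule lim_by_norm[OF Blip' d1])
  have l3: "(\<lambda>n. C (Y (Suc (Suc n)) i) - C (Y (Suc n) i)) \<longlonglongrightarrow> 0" by (rule lim_by_norm[OF Clip d1])
  have "(\<lambda>n. (B (Y (Suc n) i) - B (Y n i)) - (B (Y (Suc (Suc n)) i) - B (Y (Suc n) i)) - (C (Y (Suc (Suc n)) i) - C (Y (Suc n) i))) \<longlonglongrightarrow> 0 - 0 - 0"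
    by (intro tendsto_diff l1 l2 l3)
  moreover have "(\<lambda>n. F n i - B (Y (Suc (Suc n)) i) - C (Y (Suc (Suc n)) i)) = (\<lambda>n. (B (Y (Suc n) i) - B (Y n i)) - (B (Y (Suc (Suc n)) i) - B (Y (Suc n) i)) - (C (Y (Suc (Suc n)) i) - C (Y (Suc n) i)))"
    unfolding F_def by (rule ext) (simp add: algebra_simps scaleR_2)
  ultimately show ?thesis by simp
qed

end

end

context alg begin

lemma w_eq: assumes i: "i < m"
  shows "al n i + \<omega> i *\<^sub>R (B (Y (Suc (Suc n)) i) + C (Y (Suc (Suc n)) i))
     = (\<omega> i / \<gamma>) *\<^sub>R (X (Suc n) - z (Suc (Suc n)) i) - \<omega> i *\<^sub>R (F n i - B (Y (Suc (Suc n)) i) - C (Y (Suc (Suc n)) i))"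
proof -
  have c: "cc i \<noteq> 0" using ccpos[OF i] by simp
  have inv: "1 / cc i = \<omega> i / \<gamma>" unfolding cc_def using \<omega>pos[OF i] \<gamma> by simp
  have "al n i = (1 / cc i) *\<^sub>R (cc i *\<^sub>R al n i)" using c by simp
  also have "\<dots> = (\<omega> i / \<gamma>) *\<^sub>R (X (Suc n) - z (Suc (Suc n)) i - \<gamma> *\<^sub>R F n i)" unfolding KI[OF i] inv ..
  also have "\<dots> = (\<omega> i / \<gamma>) *\<^sub>R (X (Suc n) - z (Suc (Suc n)) i) - \<omega> i *\<^sub>R F n i"
    using \<gamma> by (simp add: scaleR_diff_right)
  finally show ?thesis by (simp add: algebra_simps)
qed

lemma T_nonneg:
  assumes q: "\<And>i. i < m \<Longrightarrow> q i \<in> A i (p i)"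
  shows "0 \<le> (\<Sum>i<m. inner (Y (Suc (Suc n)) i - p i)
      ((al n i + \<omega> i *\<^sub>R (B (Y (Suc (Suc n)) i) + C (Y (Suc (Suc n)) i))) - (q i + \<omega> i *\<^sub>R (B (p i) + C (p i)))))"
proof (rule sum_nonneg)
  fix i assume "i \<in> {..<m}"
  hence i: "i < m" by simp
  define Yv where "Yv = Y (Suc (Suc n)) i"
  have h1: "0 \<le> inner (Yv - p i) (al n i - q i)" unfolding Yv_def using mm_mono[OF A[OF i] al_mem[OF i] q[OF i]] .
  have h2: "0 \<le> inner (Yv - p i) (B Yv - B (p i))" by (rule Bmono')
  have h3: "0 \<le> inner (Yv - p i) (C Yv - C (p i))"
    using Ccoc'[of Yv "p i"] \<beta> by (smt (verit) mult_nonneg_nonneg zero_le_power2)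
  have e: "(al n i + \<omega> i *\<^sub>R (B Yv + C Yv)) - (q i + \<omega> i *\<^sub>R (B (p i) + C (p i)))
      = (al n i - q i) + \<omega> i *\<^sub>R (B Yv - B (p i)) + \<omega> i *\<^sub>R (C Yv - C (p i))"
    by (simp add: algebra_simps)
  have "0 \<le> inner (Yv - p i) (al n i - q i) + \<omega> i * inner (Yv - p i) (B Yv - B (p i)) + \<omega> i * inner (Yv - p i) (C Yv - C (p i))"
    using h1 h2 h3 \<omega>pos[OF i] by simp
  thus "0 \<le> inner (Y (Suc (Suc n)) i - p i) ((al n i + \<omega> i *\<^sub>R (B (Y (Suc (Suc n)) i) + C (Y (Suc (Suc n)) i))) - (q i + \<omega> i *\<^sub>R (B (p i) + C (p i))))"
    unfolding Yv_def[symmetric] e by (simp add: inner_add_right)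
qed

end

lemma alg_lin:
  fixes X' p' z' qq' :: "'a::real_inner"
  shows "inner (X' - p') (c *\<^sub>R (X' - z') - qq') = c * inner X' (X' - z') + (- inner X' qq' - c * (inner X' p' - inner z' p') + inner p' qq')"
  by (simp add: inner_diff inner_commute algebra_simps)

context alg begin

lemma sum_zero_avg:
  assumes "V = (\<Sum>j<m. \<omega> j *\<^sub>R s j)"
  shows "(\<Sum>i<m. (\<omega> i / \<gamma>) * inner V (V - s i)) = 0"
proof -
  have "(\<Sum>i<m. (\<omega> i / \<gamma>) * inner V (V - s i)) = (1 / \<gamma>) * inner V (\<Sum>i<m. \<omega> i *\<^sub>R (V - s i))"
    by (simp add: inner_sum_right sum_distrib_left)
  also have "(\<Sum>i<m. \<omega> i *\<^sub>R (V - s i)) = (\<Sum>i<m. \<omega> i) *\<^sub>R V - (\<Sum>i<m. \<omega> i *\<^sub>R s i)"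
    by (simp add: scaleR_diff_right sum_subtractf scaleR_sum_left)
  also have "\<dots> = 0" using assms \<omega>sum by simp
  finally show ?thesis by simp
qed

lemma lim_ineq:
  assumes sol: "sol xs as" and g: "strict_mono g"
    and wc: "\<And>i. i < m \<Longrightarrow> weakly_converges (\<lambda>k. z (Suc (g k)) i) (zb i)"
    and q: "\<And>i. i < m \<Longrightarrow> q i \<in> A i (p i)"
  shows "0 \<le> (\<Sum>i<m. inner ((\<Sum>j<m. \<omega> j *\<^sub>R zb j) - p i)
           ((\<omega> i / \<gamma>) *\<^sub>R ((\<Sum>j<m. \<omega> j *\<^sub>R zb j) - zb i) - (q i + \<omega> i *\<^sub>R (B (p i) + C (p i)))))"
proof -
  define xb where "xb = (\<Sum>j<m. \<omega> j *\<^sub>R zb j)"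
  define qq where "qq i = q i + \<omega> i *\<^sub>R (B (p i) + C (p i))" for i
  define Xn where "Xn n = X (Suc n)" for n
  define rr where "rr n i = z (Suc (Suc n)) i - z (Suc n) i" for n i
  define Dn where "Dn n i = F n i - B (Y (Suc (Suc n)) i) - C (Y (Suc (Suc n)) i)" for n i
  define Wm where "Wm n i = (\<omega> i / \<gamma>) *\<^sub>R (Xn n - z (Suc n) i) - qq i" for n i
  define Ew where "Ew n i = - ((\<omega> i / \<gamma>) *\<^sub>R rr n i) - \<omega> i *\<^sub>R Dn n i" for n i
  define lin where "lin n i = - inner (Xn n) (qq i) - (\<omega> i / \<gamma>) * (inner (Xn n) (p i) - inner (z (Suc n) i) (p i)) + inner (p i) (qq i)" for n i
  define err where "err n i = inner (Xn n - p i) (Ew n i) + inner (rr n i) (Wm n i) + inner (rr n i) (Ew n i)" for n i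
  define lin0 where "lin0 i = - inner xb (qq i) - (\<omega> i / \<gamma>) * (inner xb (p i) - inner (zb i) (p i)) + inner (p i) (qq i)" for i
  define T where "T n = (\<Sum>i<m. inner (Y (Suc (Suc n)) i - p i)
      ((al n i + \<omega> i *\<^sub>R (B (Y (Suc (Suc n)) i) + C (Y (Suc (Suc n)) i))) - qq i))" for n
  have Tnn: "0 \<le> T n" for n unfolding T_def qq_def by (rule T_nonneg[OF q])
  have Xn_avg: "Xn n = (\<Sum>j<m. \<omega> j *\<^sub>R z (Suc n) j)" for n unfolding Xn_def by (rule X_eq)
  have per_i: "inner (Y (Suc (Suc n)) i - p i) ((al n i + \<omega> i *\<^sub>R (B (Y (Suc (Suc n)) i) + C (Y (Suc (Suc n)) i))) - qq i)
      = (\<omega> i / \<gamma>) * inner (Xn n) (Xn n - z (Suc n) i) + lin n i + err n i" if i: "i < m" for n i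
  proof -
    have e1: "Y (Suc (Suc n)) i - p i = (Xn n - p i) + rr n i"
      unfolding Xn_def rr_def using Ystep[OF i, of "Suc n"] by (simp add: algebra_simps)
    have e2: "(al n i + \<omega> i *\<^sub>R (B (Y (Suc (Suc n)) i) + C (Y (Suc (Suc n)) i))) - qq i = Wm n i + Ew n i"
      unfolding w_eq[OF i] Wm_def Ew_def rr_def Dn_def Xn_def by (simp add: algebra_simps)
    have "inner ((Xn n - p i) + rr n i) (Wm n i + Ew n i) = inner (Xn n - p i) (Wm n i) + err n i"
      unfolding err_def by (simp add: inner_add_left inner_add_right)
    also have "inner (Xn n - p i) (Wm n i) = (\<omega> i / \<gamma>) * inner (Xn n) (Xn n - z (Suc n) i) + lin n i"
      unfolding Wm_def lin_def by (rule alg_lin)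
    finally show ?thesis unfolding e1 e2 by simp
  qed
  have T_eq: "T n = (\<Sum>i<m. lin n i) + (\<Sum>i<m. err n i)" for n
  proof -
    have "T n = (\<Sum>i<m. (\<omega> i / \<gamma>) * inner (Xn n) (Xn n - z (Suc n) i) + lin n i + err n i)"
      unfolding T_def by (rule sum.cong) (simp_all add: per_i)
    also have "\<dots> = (\<Sum>i<m. (\<omega> i / \<gamma>) * inner (Xn n) (Xn n - z (Suc n) i)) + (\<Sum>i<m. lin n i) + (\<Sum>i<m. err n i)"
      by (simp add: sum.distrib)
    also have "(\<Sum>i<m. (\<omega> i / \<gamma>) * inner (Xn n) (Xn n - z (Suc n) i)) = 0"
      by (rule sum_zero_avg[OF Xn_avg])
    finally show ?thesis by simp
  qed
    have wX: "weakly_converges (\<lambda>k. Xn (g k)) xb"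
    unfolding Xn_avg xb_def by (rule weak_sum) (rule wc)
  have lin_lim: "(\<lambda>k. \<Sum>i<m. lin (g k) i) \<longlonglongrightarrow> (\<Sum>i<m. lin0 i)"
  proof (rule tendsto_sum)
    fix i assume "i \<in> {..<m}"
    hence i: "i < m" by simp
    have a: "(\<lambda>k. inner (Xn (g k)) v) \<longlonglongrightarrow> inner xb v" for v using wX unfolding weakly_converges_def by blast
    have b: "(\<lambda>k. inner (z (Suc (g k)) i) v) \<longlonglongrightarrow> inner (zb i) v" for v using wc[OF i] unfolding weakly_converges_def by blast
    show "(\<lambda>k. lin (g k) i) \<longlonglongrightarrow> lin0 i"
      unfolding lin_def lin0_def by (intro tendsto_intros a b)
  qed
    obtain M where M: "\<forall>n i. i < m \<longrightarrow> norm (z (Suc n) i) \<le> M" using zbound[OF sol] by blast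
  have XnM: "norm (Xn n) \<le> M" for n unfolding Xn_def by (rule Xbound[OF sol M])
  have err_lim: "(\<lambda>n. \<Sum>i<m. err n i) \<longlonglongrightarrow> (\<Sum>i<m. 0)"
  proof (rule tendsto_sum)
    fix i assume "i \<in> {..<m}"
    hence i: "i < m" by simp
    have rr0: "(\<lambda>n. rr n i) \<longlonglongrightarrow> 0" unfolding rr_def using LIMSEQ_Suc[OF r_lim[OF sol i]] by simp
    have D0: "(\<lambda>n. Dn n i) \<longlonglongrightarrow> 0" unfolding Dn_def by (rule D_lim[OF sol i])
    have Ew0: "(\<lambda>n. Ew n i) \<longlonglongrightarrow> 0"
    proof -
      have "(\<lambda>n. - ((\<omega> i / \<gamma>) *\<^sub>R rr n i) - \<omega> i *\<^sub>R Dn n i) \<longlonglongrightarrow> - ((\<omega> i / \<gamma>) *\<^sub>R 0) - \<omega> i *\<^sub>R 0"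
        by (intro tendsto_intros rr0 D0)
      thus ?thesis unfolding Ew_def by simp
    qed
    have aaB: "norm (Xn n - p i) \<le> M + norm (p i)" for n
      using norm_triangle_ineq4[of "Xn n" "p i"] XnM[of n] by linarith
    have WmB: "norm (Wm n i) \<le> \<bar>\<omega> i / \<gamma>\<bar> * (M + M) + norm (qq i)" for n
    proof -
      have "norm (Xn n - z (Suc n) i) \<le> M + M"
        using norm_triangle_ineq4[of "Xn n" "z (Suc n) i"] XnM[of n] M[rule_format, OF i, of n] by linarith
      hence "\<bar>\<omega> i / \<gamma>\<bar> * norm (Xn n - z (Suc n) i) \<le> \<bar>\<omega> i / \<gamma>\<bar> * (M + M)"
        by (rule mult_left_mono) simp
      hence "norm ((\<omega> i / \<gamma>) *\<^sub>R (Xn n - z (Suc n) i)) \<le> \<bar>\<omega> i / \<gamma>\<bar> * (M + M)"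
        by (simp only: norm_scaleR)
      thus ?thesis unfolding Wm_def using norm_triangle_ineq4[of "(\<omega> i / \<gamma>) *\<^sub>R (Xn n - z (Suc n) i)" "qq i"] by linarith
    qed
    have t1: "(\<lambda>n. inner (Xn n - p i) (Ew n i)) \<longlonglongrightarrow> 0" by (rule inner_bdd_zero[OF aaB Ew0])
    have t2: "(\<lambda>n. inner (Wm n i) (rr n i)) \<longlonglongrightarrow> 0" by (rule inner_bdd_zero[OF WmB rr0])
    have t3: "(\<lambda>n. inner (rr n i) (Ew n i)) \<longlonglongrightarrow> 0" using tendsto_inner[OF rr0 Ew0] by simp
    have "(\<lambda>n. inner (Xn n - p i) (Ew n i) + inner (Wm n i) (rr n i) + inner (rr n i) (Ew n i)) \<longlonglongrightarrow> 0 + 0 + 0"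
      by (intro tendsto_add t1 t2 t3)
    thus "(\<lambda>n. err n i) \<longlonglongrightarrow> 0" unfolding err_def by (simp add: inner_commute)
  qed
  hence err_lim': "(\<lambda>k. \<Sum>i<m. err (g k) i) \<longlonglongrightarrow> 0"
    using LIMSEQ_subseq_LIMSEQ[OF _ g] by (simp add: o_def)
  have "(\<lambda>k. T (g k)) \<longlonglongrightarrow> (\<Sum>i<m. lin0 i) + 0"
    unfolding T_eq by (intro tendsto_add lin_lim err_lim')
  hence "0 \<le> (\<Sum>i<m. lin0 i)" using Tnn by (simp add: LIMSEQ_le_const)
  also have "(\<Sum>i<m. lin0 i) = (\<Sum>i<m. inner (xb - p i) ((\<omega> i / \<gamma>) *\<^sub>R (xb - zb i) - qq i))"
  proof -
    have "(\<Sum>i<m. inner (xb - p i) ((\<omega> i / \<gamma>) *\<^sub>R (xb - zb i) - qq i))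
        = (\<Sum>i<m. (\<omega> i / \<gamma>) * inner xb (xb - zb i) + lin0 i)"
      unfolding lin0_def by (rule sum.cong) (simp_all add: alg_lin)
    also have "\<dots> = (\<Sum>i<m. (\<omega> i / \<gamma>) * inner xb (xb - zb i)) + (\<Sum>i<m. lin0 i)" by (simp add: sum.distrib)
    also have "(\<Sum>i<m. (\<omega> i / \<gamma>) * inner xb (xb - zb i)) = 0" by (rule sum_zero_avg[OF xb_def])
    finally show ?thesis by simp
  qed
  finally show ?thesis unfolding xb_def qq_def .
qed

end

context alg begin

lemma cluster_sol:
  assumes sol: "sol xs as" and g: "strict_mono g"
    and wc: "\<And>i. i < m \<Longrightarrow> weakly_converges (\<lambda>k. z (Suc (g k)) i) (zb i)"
  defines "xb \<equiv> (\<Sum>j<m. \<omega> j *\<^sub>R zb j)"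
  defines "ab \<equiv> (\<lambda>i. (\<omega> i / \<gamma>) *\<^sub>R (xb - zb i) - \<omega> i *\<^sub>R (B xb + C xb))"
  shows "sol xb ab \<and> (\<forall>i<m. zb i = zsol xb ab i)"
proof -
  define Lp where "Lp = L + 1 / \<beta>"
  have Lp: "Lp > 0" unfolding Lp_def by (intro add_pos_pos) (use L \<beta> in simp_all)
  define t where "t = 1 / (2 * Lp)"
  have t: "t > 0" unfolding t_def using Lp by simp
  have tL: "t * Lp \<le> 1/2" unfolding t_def using Lp by simp
  have "\<forall>i. \<exists>pq. i < m \<longrightarrow> (snd pq \<in> A i (fst pq) \<and> xb + t *\<^sub>R ab i = fst pq + t *\<^sub>R snd pq)"
  proof
    fix i show "\<exists>pq. i < m \<longrightarrow> (snd pq \<in> A i (fst pq) \<and> xb + t *\<^sub>R ab i = fst pq + t *\<^sub>R snd pq)"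
    proof (cases "i < m")
      case True
      obtain p where "\<exists>a\<in>A i p. xb + t *\<^sub>R ab i = p + t *\<^sub>R a" using minty_scale[OF A[OF True] t] by blast
      then obtain a where "a \<in> A i p" "xb + t *\<^sub>R ab i = p + t *\<^sub>R a" by blast
      thus ?thesis by (intro exI[of _ "(p, a)"]) simp
    qed simp
  qed
  then obtain f where f: "\<And>i. i < m \<Longrightarrow> snd (f i) \<in> A i (fst (f i)) \<and> xb + t *\<^sub>R ab i = fst (f i) + t *\<^sub>R snd (f i)"
    by metis
  define P where "P i = fst (f i)" for i
  define Q where "Q i = snd (f i)" for i
  have PQ: "Q i \<in> A i (P i)" "xb + t *\<^sub>R ab i = P i + t *\<^sub>R Q i" if "i < m" for i
    using f[OF that] unfolding P_def Q_def by auto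
  define d where "d i = Q i - ab i" for i
  have "0 \<le> (\<Sum>i<m. inner (xb - P i) ((\<omega> i / \<gamma>) *\<^sub>R (xb - zb i) - (Q i + \<omega> i *\<^sub>R (B (P i) + C (P i)))))"
    unfolding xb_def by (rule lim_ineq[OF sol g wc PQ(1)])
  also have "\<dots> \<le> (\<Sum>i<m. - (t / 2) * (norm (d i))\<^sup>2)"
  proof (rule sum_mono)
    fix i assume "i \<in> {..<m}"
    hence i: "i < m" by simp
    define Dl where "Dl = (B xb + C xb) - (B (P i) + C (P i))"
    have e1: "xb - P i = t *\<^sub>R d i" using PQ(2)[OF i] unfolding d_def by (simp add: algebra_simps)
    have e2: "(\<omega> i / \<gamma>) *\<^sub>R (xb - zb i) - (Q i + \<omega> i *\<^sub>R (B (P i) + C (P i))) = - d i + \<omega> i *\<^sub>R Dl"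
      unfolding d_def Dl_def ab_def by (simp add: algebra_simps)
    have nD: "norm Dl \<le> Lp * norm (xb - P i)"
    proof -
      have "norm Dl \<le> norm (B xb - B (P i)) + norm (C xb - C (P i))"
        unfolding Dl_def by (metis add_diff_add norm_triangle_ineq)
      also have "\<dots> \<le> L * norm (xb - P i) + (1 / \<beta>) * norm (xb - P i)"
        using Blip'[of xb "P i"] Clip[of xb "P i"] by linarith
      finally show ?thesis unfolding Lp_def by (simp add: algebra_simps)
    qed
    show "inner (xb - P i) ((\<omega> i / \<gamma>) *\<^sub>R (xb - zb i) - (Q i + \<omega> i *\<^sub>R (B (P i) + C (P i)))) \<le> - (t / 2) * (norm (d i))\<^sup>2"
      by (rule minty_term[OF e1 e2 nD t _ _ _ tL]) (use \<omega>pos[OF i] \<omega>le1[OF i] Lp in auto)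
  qed
  finally have "0 \<le> (\<Sum>i<m. - (t / 2) * (norm (d i))\<^sup>2)" .
  hence "(\<Sum>i<m. (t / 2) * (norm (d i))\<^sup>2) \<le> 0" by (simp add: sum_negf)
  moreover have "(\<Sum>i<m. (t / 2) * (norm (d i))\<^sup>2) \<ge> 0" using t by (intro sum_nonneg) simp
  ultimately have "(\<Sum>i<m. (t / 2) * (norm (d i))\<^sup>2) = 0" by simp
  hence "\<forall>i\<in>{..<m}. (t / 2) * (norm (d i))\<^sup>2 = 0"
    using t by (subst sum_nonneg_eq_0_iff[symmetric]) auto
  hence d0: "d i = 0" if "i < m" for i using t that by simp
  have mem: "ab i \<in> A i xb" if i: "i < m" for i
  proof -
    have "Q i = ab i" using d0[OF i] unfolding d_def by simp
    moreover have "P i = xb" using PQ(2)[OF i] \<open>Q i = ab i\<close> by simp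
    ultimately show ?thesis using PQ(1)[OF i] by simp
  qed
  have sumab: "(\<Sum>i<m. ab i) + B xb + C xb = 0"
  proof -
    have "(\<Sum>i<m. ab i) = (1 / \<gamma>) *\<^sub>R (\<Sum>i<m. \<omega> i *\<^sub>R (xb - zb i)) - (\<Sum>i<m. \<omega> i) *\<^sub>R (B xb + C xb)"
      unfolding ab_def by (simp add: sum_subtractf scaleR_sum_right scaleR_sum_left)
    also have "(\<Sum>i<m. \<omega> i *\<^sub>R (xb - zb i)) = (\<Sum>i<m. \<omega> i) *\<^sub>R xb - xb"
      unfolding xb_def by (simp add: scaleR_diff_right sum_subtractf scaleR_sum_left)
    finally show ?thesis using \<omega>sum by simp
  qed
  have zeq: "zb i = zsol xb ab i" if i: "i < m" for i
  proof -
    have "cc i * (\<omega> i / \<gamma>) = 1" using \<omega>cc[OF i] \<gamma> by (simp add: field_simps mult.commute)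
    moreover have "cc i * \<omega> i = \<gamma>" using \<omega>cc[OF i] by (simp add: mult.commute)
    ultimately have "cc i *\<^sub>R ab i = (xb - zb i) - \<gamma> *\<^sub>R (B xb + C xb)"
      unfolding ab_def by (simp add: scaleR_diff_right)
    thus ?thesis unfolding zsol_def by (simp add: algebra_simps)
  qed
  show ?thesis unfolding sol_def using mem sumab zeq by blast
qed

end

lemma sq_diff_ident:
  fixes a b c :: "'a::real_inner"
  shows "(norm (a - b))\<^sup>2 - (norm (a - c))\<^sup>2 = 2 * inner a (c - b) + ((norm b)\<^sup>2 - (norm c)\<^sup>2)"
  by (simp add: power2_norm_eq_inner inner_diff inner_commute algebra_simps)

context alg begin

lemma E_zb:
  assumes "\<forall>i<m. zb i = zsol xb ab i"
  shows "E (zsol xb ab) (Suc n) = (\<Sum>i<m. \<omega> i * (norm (z (Suc n) i - zb i))\<^sup>2)"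
  unfolding E_def using assms by (intro sum.cong) auto

lemma unique_cluster:
  assumes sol: "sol xs as" and g0: "strict_mono g0"
    and wc0: "\<And>i. i < m \<Longrightarrow> weakly_converges (\<lambda>k. z (Suc (g0 k)) i) (zb0 i)"
    and g: "strict_mono g"
    and wc: "\<And>i. i < m \<Longrightarrow> weakly_converges (\<lambda>k. z (Suc (g k)) i) (zb i)"
  shows "\<forall>i<m. zb i = zb0 i"
proof -
  define xb where "xb = (\<Sum>j<m. \<omega> j *\<^sub>R zb j)"
  define ab where "ab = (\<lambda>i. (\<omega> i / \<gamma>) *\<^sub>R (xb - zb i) - \<omega> i *\<^sub>R (B xb + C xb))"
  define xb0 where "xb0 = (\<Sum>j<m. \<omega> j *\<^sub>R zb0 j)"
  define ab0 where "ab0 = (\<lambda>i. (\<omega> i / \<gamma>) *\<^sub>R (xb0 - zb0 i) - \<omega> i *\<^sub>R (B xb0 + C xb0))"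
  have c: "sol xb ab \<and> (\<forall>i<m. zb i = zsol xb ab i)" unfolding xb_def ab_def by (rule cluster_sol[OF sol g wc])
  have c0: "sol xb0 ab0 \<and> (\<forall>i<m. zb0 i = zsol xb0 ab0 i)" unfolding xb0_def ab0_def by (rule cluster_sol[OF sol g0 wc0])
  have E1: "convergent (\<lambda>n. \<Sum>i<m. \<omega> i * (norm (z (Suc n) i - zb i))\<^sup>2)"
    using E_conv[of xb ab] c E_zb[of zb xb ab] by simp
  have E0: "convergent (\<lambda>n. \<Sum>i<m. \<omega> i * (norm (z (Suc n) i - zb0 i))\<^sup>2)"
    using E_conv[of xb0 ab0] c0 E_zb[of zb0 xb0 ab0] by simp
  define K where "K = (\<Sum>i<m. \<omega> i * ((norm (zb i))\<^sup>2 - (norm (zb0 i))\<^sup>2))"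
  define ell where "ell n = (\<Sum>i<m. \<omega> i * inner (z (Suc n) i) (zb0 i - zb i))" for n
  have ell_eq: "ell n = ((\<Sum>i<m. \<omega> i * (norm (z (Suc n) i - zb i))\<^sup>2) - (\<Sum>i<m. \<omega> i * (norm (z (Suc n) i - zb0 i))\<^sup>2) - K) / 2" for n
  proof -
    have "(\<Sum>i<m. \<omega> i * (norm (z (Suc n) i - zb i))\<^sup>2) - (\<Sum>i<m. \<omega> i * (norm (z (Suc n) i - zb0 i))\<^sup>2)
        = (\<Sum>i<m. \<omega> i * ((norm (z (Suc n) i - zb i))\<^sup>2 - (norm (z (Suc n) i - zb0 i))\<^sup>2))"
      by (simp add: sum_subtractf right_diff_distrib)
    also have "\<dots> = (\<Sum>i<m. 2 * (\<omega> i * inner (z (Suc n) i) (zb0 i - zb i)) + \<omega> i * ((norm (zb i))\<^sup>2 - (norm (zb0 i))\<^sup>2))"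
    proof (rule sum.cong)
      fix i show "\<omega> i * ((norm (z (Suc n) i - zb i))\<^sup>2 - (norm (z (Suc n) i - zb0 i))\<^sup>2) =
          2 * (\<omega> i * inner (z (Suc n) i) (zb0 i - zb i)) + \<omega> i * ((norm (zb i))\<^sup>2 - (norm (zb0 i))\<^sup>2)"
        unfolding sq_diff_ident by (simp only: distrib_left mult.left_commute)
    qed simp
    also have "\<dots> = 2 * ell n + K" unfolding ell_def K_def by (simp add: sum.distrib sum_distrib_left)
    finally show ?thesis by simp
  qed
  have "convergent ell"
  proof -
    obtain l1 l0 where "(\<lambda>n. \<Sum>i<m. \<omega> i * (norm (z (Suc n) i - zb i))\<^sup>2) \<longlonglongrightarrow> l1"
        "(\<lambda>n. \<Sum>i<m. \<omega> i * (norm (z (Suc n) i - zb0 i))\<^sup>2) \<longlonglongrightarrow> l0"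
      using E1 E0 unfolding convergent_def by blast
    hence "(\<lambda>n. ((\<Sum>i<m. \<omega> i * (norm (z (Suc n) i - zb i))\<^sup>2) - (\<Sum>i<m. \<omega> i * (norm (z (Suc n) i - zb0 i))\<^sup>2) - K) / 2) \<longlonglongrightarrow> (l1 - l0 - K) / 2"
      by (intro tendsto_intros) auto
    thus ?thesis unfolding ell_eq[abs_def] convergent_def by blast
  qed
  then obtain l where l: "ell \<longlonglongrightarrow> l" unfolding convergent_def by blast
  have lg: "(\<lambda>k. ell (g k)) \<longlonglongrightarrow> (\<Sum>i<m. \<omega> i * inner (zb i) (zb0 i - zb i))"
    unfolding ell_def using wc unfolding weakly_converges_def by (intro tendsto_sum tendsto_mult_left) auto
  have lg0: "(\<lambda>k. ell (g0 k)) \<longlonglongrightarrow> (\<Sum>i<m. \<omega> i * inner (zb0 i) (zb0 i - zb i))"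
    unfolding ell_def using wc0 unfolding weakly_converges_def by (intro tendsto_sum tendsto_mult_left) auto
  have "(\<lambda>k. ell (g k)) \<longlonglongrightarrow> l" using LIMSEQ_subseq_LIMSEQ[OF l g] by (simp add: o_def)
  hence e1: "(\<Sum>i<m. \<omega> i * inner (zb i) (zb0 i - zb i)) = l" using lg LIMSEQ_unique by blast
  have "(\<lambda>k. ell (g0 k)) \<longlonglongrightarrow> l" using LIMSEQ_subseq_LIMSEQ[OF l g0] by (simp add: o_def)
  hence e0: "(\<Sum>i<m. \<omega> i * inner (zb0 i) (zb0 i - zb i)) = l" using lg0 LIMSEQ_unique by blast
  have "(\<Sum>i<m. \<omega> i * (norm (zb0 i - zb i))\<^sup>2) = (\<Sum>i<m. \<omega> i * inner (zb0 i) (zb0 i - zb i) - \<omega> i * inner (zb i) (zb0 i - zb i))"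
    by (rule sum.cong) (simp_all add: power2_norm_eq_inner inner_diff_left right_diff_distrib)
  also have "\<dots> = (\<Sum>i<m. \<omega> i * inner (zb0 i) (zb0 i - zb i)) - (\<Sum>i<m. \<omega> i * inner (zb i) (zb0 i - zb i))"
    by (rule sum_subtractf)
  finally have "(\<Sum>i<m. \<omega> i * (norm (zb0 i - zb i))\<^sup>2) = (\<Sum>i<m. \<omega> i * inner (zb0 i) (zb0 i - zb i)) - (\<Sum>i<m. \<omega> i * inner (zb i) (zb0 i - zb i))" .
  hence S0: "(\<Sum>i<m. \<omega> i * (norm (zb0 i - zb i))\<^sup>2) = 0" using e1 e0 by simp
  have "\<forall>i\<in>{..<m}. \<omega> i * (norm (zb0 i - zb i))\<^sup>2 = 0"
    using S0 \<omega>nn by (subst sum_nonneg_eq_0_iff[symmetric]) auto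
  show ?thesis
  proof (intro allI impI)
    fix i assume i: "i < m"
    hence "\<omega> i * (norm (zb0 i - zb i))\<^sup>2 = 0" using \<open>\<forall>i\<in>{..<m}. \<omega> i * (norm (zb0 i - zb i))\<^sup>2 = 0\<close> by simp
    thus "zb i = zb0 i" using \<omega>pos[OF i] by simp
  qed
qed

theorem final:
  assumes nonempty: "zer_sum m A B C \<noteq> {}"
  shows "\<exists>xl. weakly_converges x xl \<and> xl \<in> zer_sum m A B C"
proof -
  obtain xs where "xs \<in> zer_sum m A B C" using nonempty by blast
  then obtain as where sol: "sol xs as" unfolding zer_sum_def sol_def by blast
  obtain M where M: "\<forall>n i. i < m \<longrightarrow> norm (z (Suc n) i) \<le> M" using zbound[OF sol] by blast
  obtain g0 zb0 where g0: "strict_mono g0" and wc0: "\<forall>i<m. weakly_converges (\<lambda>k. z (Suc (g0 k)) i) (zb0 i)"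
    using wcomp_multi[of m "\<lambda>n i. z (Suc n) i" M] M by blast
  define xb0 where "xb0 = (\<Sum>j<m. \<omega> j *\<^sub>R zb0 j)"
  define ab0 where "ab0 = (\<lambda>i. (\<omega> i / \<gamma>) *\<^sub>R (xb0 - zb0 i) - \<omega> i *\<^sub>R (B xb0 + C xb0))"
  have c0: "sol xb0 ab0 \<and> (\<forall>i<m. zb0 i = zsol xb0 ab0 i)" unfolding xb0_def ab0_def
    by (rule cluster_sol[OF sol g0]) (use wc0 in blast)
  have zconv: "weakly_converges (\<lambda>n. z (Suc n) i) (zb0 i)" if i: "i < m" for i
    unfolding weakly_converges_def
  proof (rule ccontr)
    assume "\<not> (\<forall>w. (\<lambda>n. inner (z (Suc n) i) w) \<longlonglongrightarrow> inner (zb0 i) w)"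
    then obtain w where nw: "\<not> (\<lambda>n. inner (z (Suc n) i) w) \<longlonglongrightarrow> inner (zb0 i) w" by blast
    hence "\<not> (\<forall>r>0. \<exists>no. \<forall>n\<ge>no. norm (inner (z (Suc n) i) w - inner (zb0 i) w) < r)"
      by (subst (asm) LIMSEQ_iff) assumption
    then obtain e where e: "e > 0" and ee0: "\<not> (\<exists>no. \<forall>n\<ge>no. norm (inner (z (Suc n) i) w - inner (zb0 i) w) < e)"
      by blast
    have ee: "\<exists>n\<ge>N. \<not> norm (inner (z (Suc n) i) w - inner (zb0 i) w) < e" for N
      using ee0 by blast
    define Sset where "Sset = {n. e \<le> \<bar>inner (z (Suc n) i) w - inner (zb0 i) w\<bar>}"
    have "infinite Sset" unfolding infinite_nat_iff_unbounded_le
    proof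
      fix N
      obtain n where "n \<ge> N" "\<not> norm (inner (z (Suc n) i) w - inner (zb0 i) w) < e" using ee[of N] by blast
      hence "n \<ge> N \<and> n \<in> Sset" unfolding Sset_def by (simp add: not_less)
      thus "\<exists>n\<ge>N. n \<in> Sset" by blast
    qed
    then obtain h :: "nat \<Rightarrow> nat" where h: "strict_mono h" "\<And>k. h k \<in> Sset" using infinite_enumerate by blast
    obtain g' zb' where g': "strict_mono g'" and wc': "\<forall>j<m. weakly_converges (\<lambda>k. z (Suc (h (g' k))) j) (zb' j)"
      using wcomp_multi[of m "\<lambda>n j. z (Suc (h n)) j" M] M by blast
    have hg: "strict_mono (h \<circ> g')" using h(1) g' by (rule strict_mono_o)
    have wc0': "\<And>j. j < m \<Longrightarrow> weakly_converges (\<lambda>k. z (Suc (g0 k)) j) (zb0 j)" using wc0 by blast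
    have wc'': "\<And>j. j < m \<Longrightarrow> weakly_converges (\<lambda>k. z (Suc ((h \<circ> g') k)) j) (zb' j)"
      using wc' by (simp add: o_def)
    have "\<forall>j<m. zb' j = zb0 j" by (rule unique_cluster[OF sol g0 wc0' hg wc''])
    hence "zb' i = zb0 i" using i by blast
    hence "weakly_converges (\<lambda>k. z (Suc (h (g' k))) i) (zb0 i)" using wc' i by metis
    hence "(\<lambda>k. inner (z (Suc (h (g' k))) i) w) \<longlonglongrightarrow> inner (zb0 i) w" unfolding weakly_converges_def by blast
    hence "\<forall>r>0. \<exists>no. \<forall>n\<ge>no. norm (inner (z (Suc (h (g' n))) i) w - inner (zb0 i) w) < r"
      by (simp only: LIMSEQ_iff)
    then obtain N where "\<forall>k\<ge>N. norm (inner (z (Suc (h (g' k))) i) w - inner (zb0 i) w) < e"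
      using e by blast
    hence "norm (inner (z (Suc (h (g' N))) i) w - inner (zb0 i) w) < e" by blast
    hence "\<bar>inner (z (Suc (h (g' N))) i) w - inner (zb0 i) w\<bar> < e" by simp
    moreover have "h (g' N) \<in> Sset" by (rule h(2))
    ultimately show False unfolding Sset_def by simp
  qed
  have "weakly_converges (\<lambda>n. \<Sum>j<m. \<omega> j *\<^sub>R z (Suc n) j) xb0"
    unfolding xb0_def by (rule weak_sum) (rule zconv)
  hence wx: "weakly_converges (\<lambda>n. x (Suc (Suc n))) xb0" using xrec by simp
  have "weakly_converges x xb0" unfolding weakly_converges_def
  proof
    fix w
    have "(\<lambda>n. inner (x (n + 2)) w) \<longlonglongrightarrow> inner xb0 w" using wx unfolding weakly_converges_def by simp
    thus "(\<lambda>n. inner (x n) w) \<longlonglongrightarrow> inner xb0 w" by (rule LIMSEQ_offset)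
  qed
  moreover have "xb0 \<in> zer_sum m A B C" using c0 unfolding sol_def zer_sum_def by blast
  ultimately show ?thesis by blast
qed

end

theorem theorem4p1:
  fixes A :: "nat \<Rightarrow> 'a::{real_inner, complete_space} \<Rightarrow> 'a set"
    and B C :: "'a \<Rightarrow> 'a"
    and m :: nat and L \<beta> \<gamma> :: real and \<omega> :: "nat \<Rightarrow> real"
    and x :: "nat \<Rightarrow> 'a" and z :: "nat \<Rightarrow> nat \<Rightarrow> 'a" and y :: "int \<Rightarrow> nat \<Rightarrow> 'a"
  assumes m: "m \<ge> 1"
    and A: "\<And>i. i < m \<Longrightarrow> maximal_monotone (A i)"
    and L: "L > 0" and Bmono: "monotone_fun B" and Blip: "L-lipschitz_on UNIV B"
    and \<beta>: "\<beta> > 0" and Ccoc: "cocoercive \<beta> C"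
    and nonempty: "zer_sum m A B C \<noteq> {}"
    and \<omega>: "\<And>i. i < m \<Longrightarrow> 0 < \<omega> i \<and> \<omega> i \<le> 1"
    and \<omega>sum: "(\<Sum>i<m. \<omega> i) = 1"
    and \<gamma>: "0 < \<gamma>" "\<gamma> < \<beta> / (2 * (1 + 4 * \<beta> * L))"
    and xrec: "\<And>n. x (Suc n) = (\<Sum>j<m. \<omega> j *\<^sub>R z n j)"
    and yrec: "\<And>n i. i < m \<Longrightarrow> y (int n + 1) i =
        resolvent (scale_op (\<gamma> / \<omega> i) (A i))
          (2 *\<^sub>R x (Suc n) - z n i - (2 * \<gamma>) *\<^sub>R B (y (int n) i)
           + \<gamma> *\<^sub>R B (y (int n - 1) i) - \<gamma> *\<^sub>R C (y (int n) i))"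
    and zrec: "\<And>n i. i < m \<Longrightarrow> z (Suc n) i = z n i + y (int n + 1) i - x (Suc n)"
  shows "\<exists>xl. weakly_converges x xl \<and> xl \<in> zer_sum m A B C"
  proof -
  interpret alg A B C m L \<beta> \<gamma> \<omega> x z y
    by (rule alg.intro) (fact assms)+
  show ?thesis by (rule final[OF nonempty])
qed

end
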